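(* For any $p\ne q$, the relation $$A'_{pq}t_p^2t_q^2+B'_{pq}t_p^2+2C'_{pq}t_pt_q+B'_{qp}t_q^2+E'_{pq}=0,$$ where $A'_{pq}=\cos\gamma_{pq}-\cos(\alpha_{pq}+\beta_{pq}+\beta_{qp})$, $B'_{pq}=\cos\gamma_{pq}-\cos(\alpha_{pq}+\beta_{pq}-\beta_{qp})$, $B'_{qp}=\cos\gamma_{pq}-\cos(\alpha_{pq}+\beta_{qp}-\beta_{pq})$, $C'_{pq}=-2\sin\beta_{pq}\sin\beta_{qp}$, $E'_{pq}=\cos\gamma_{pq}-\cos(\alpha_{pq}-\beta_{pq}-\beta_{qp})$, is proportional to the relation $A_{pq}t_p^2t_q^2+B_{pq}t_p^2-2t_pt_q+B_{qp}t_q^2+E_{pq}=0$ with $A_{pq}=h_{qp}+h_{pq}-2g_{pq}+E_{pq}$, $B_{pq}=h_{qp}+E_{pq}$, $B_{qp}=h_{pq}+E_{pq}$ (i.e. the two polynomials in $t_p,t_q$ differ by a nonzero constant factor).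
   Context: Let $n\ge3$. $\mathbb{X}^n$ is one of $\mathbb{E}^n$; $\mathbb{S}^n$ (unit sphere in $\mathbb{E}^{n+1}$); $\Lambda^n$ (a sheet of the hyperboloid $(\mathbf{x},\mathbf{x})=-1$ in $\mathbb{E}^{n,1}$); tangent vectors are regarded as vectors of the ambient space. Consider a cross-polytope with vertices $\mathbf{a}_1,\dots,\mathbf{a}_n,\mathbf{b}_1,\dots,\mathbf{b}_n$ (facets: the non-degenerate $(n-1)$-simplices spanned by $n$-tuples containing exactly one of $\mathbf{a}_p,\mathbf{b}_p$ for each $p$). Let $\Delta=[\mathbf{a}_1\dots\mathbf{a}_n]$, $\Delta_p$ the facet spanned by $\mathbf{b}_p$ and the $\mathbf{a}_q$, $q\ne p$, $F_p$ the face of $\Delta$ opposite $\mathbf{a}_p$, $\Delta_{pq}$ the facet with vertices $\mathbf{b}_p,\mathbf{b}_q$ and $\mathbf{a}_r$, $r\ne p,q$, and $F_{pq}$ the face with vertices $\mathbf{a}_r$, $r\ne p,q$. $\alpha_{pq}$, $\beta_{pq}$, $\gamma_{pq}$ are the dihedral angles of the simplices $\Delta$, $\Delta_p$, $\Delta_{pq}$ respectively at their common codimension-2 face $F_{pq}$ (so $\alpha_{pq}=\alpha_{qp}$, $\gamma_{pq}=\gamma_{qp}$). Let $\mathbf{m}$ be a unit normal to $\Delta$, $\mathbf{n}_p$ the unit tangent vector to $\Delta$ orthogonal to $F_p$ pointing into $\Delta$, $\varphi_p$ the oriented dihedral angle between $\Delta$ and $\Delta_p$ with $\sin\varphi_p>0$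 iff $\Delta_p$ lies on the side into which $\mathbf{m}$ points, $t_p=\tan(\varphi_p/2)$, $\mathbf{b}_p^0$ the position of $\mathbf{b}_p$ when $\varphi_p=0$, and $\beta_p$ the length (for $\mathbb{E}^n$), its sine (for $\mathbb{S}^n$), or its hyperbolic sine (for $\Lambda^n$) of the altitude of $\Delta_p$ from $\mathbf{b}_p$. $G=(g_{pq})$ is the Gram matrix of $\mathbf{n}_1,\dots,\mathbf{n}_n$; $h_{pq}=\beta_p^{-1}(\mathbf{b}_p^0-\mathbf{a}_r,\mathbf{n}_q)$ ($r\ne q$) for $\mathbb{E}^n$ and $h_{pq}=\beta_p^{-1}(\mathbf{b}_p^0,\mathbf{n}_q)$ otherwise; with $\ell_{\mathbf{b}_p\mathbf{b}_q}$ the length of $[\mathbf{b}_p\mathbf{b}_q]$ and $\mathrm{dist}$ the distance in $\mathbb{X}^n$, $E_{pq}$ equals $\frac{1}{2\beta_p\beta_q}$ times $-\frac12\ell^2_{\mathbf{b}_p\mathbf{b}_q}+\frac12\mathrm{dist}^2(\mathbf{b}_p^0,\mathbf{b}_q^0)$, $\cos\ell_{\mathbf{b}_p\mathbf{b}_q}-\cos\mathrm{dist}(\mathbf{b}_p^0,\mathbf{b}_q^0)$, $-\cosh\ell_{\mathbf{b}_p\mathbf{b}_q}+\cosh\mathrm{dist}(\mathbf{b}_p^0,\mathbf{b}_q^0)$ for $\mathbb{E}^n,\mathbb{S}^n,\Lambda^n$ respectively. *)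

theory Defs
  imports "HOL-Analysis.Analysis"
begin

text \<open>Points and (tangent) vectors are vectors of the
ambient space, represented as functions nat \<Rightarrow> real whose support lies in
{..<N}, N the ambient dimension (N = n for Euc, N = n+1 for Sph and Hyp).
For Hyp the last coordinate (index N-1) is the time coordinate.
Vertices of the cross-polytope are indexed 0..n-1.\<close>

datatype geom = Euc | Sph | Hyp

definition amb :: "geom \<Rightarrow> nat \<Rightarrow> nat" where
  "amb G n = (if G = Euc then n else n + 1)"

definition inV :: "nat \<Rightarrow> (nat \<Rightarrow> real) \<Rightarrow> bool" where
  "inV N x \<longleftrightarrow> (\<forall>i\<ge>N. x i = 0)"

text \<open>The ambient scalar product: Euclidean for Euc and Sph, Minkowski for Hyp.\<close>
definition form :: "geom \<Rightarrow> nat \<Rightarrow> (nat \<Rightarrow> real) \<Rightarrow> (nat \<Rightarrow> real) \<Rightarrow> real" where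
  "form G n x y = (let N = amb G n in
     (\<Sum>i<N. x i * y i) - (if G = Hyp then 2 * x (N - 1) * y (N - 1) else 0))"

definition vsub :: "(nat \<Rightarrow> real) \<Rightarrow> (nat \<Rightarrow> real) \<Rightarrow> (nat \<Rightarrow> real)" where
  "vsub x y = (\<lambda>i. x i - y i)"

definition isPt :: "geom \<Rightarrow> nat \<Rightarrow> (nat \<Rightarrow> real) \<Rightarrow> bool" where
  "isPt G n x \<longleftrightarrow> inV (amb G n) x \<and>
     (case G of Euc \<Rightarrow> True
      | Sph \<Rightarrow> form G n x x = 1
      | Hyp \<Rightarrow> form G n x x = -1 \<and> x n > 0)"

definition gdist :: "geom \<Rightarrow> nat \<Rightarrow> (nat \<Rightarrow> real) \<Rightarrow> (nat \<Rightarrow> real) \<Rightarrow> real" where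
  "gdist G n x y = (case G of
       Euc \<Rightarrow> sqrt (form G n (vsub x y) (vsub x y))
     | Sph \<Rightarrow> arccos (form G n x y)
     | Hyp \<Rightarrow> arcosh (- form G n x y))"

text \<open>Position vector relative to a base point (Euclidean case) or the point
itself (spherical and hyperbolic case, where the model is linear).\<close>
definition rel :: "geom \<Rightarrow> (nat \<Rightarrow> real) \<Rightarrow> (nat \<Rightarrow> real) \<Rightarrow> (nat \<Rightarrow> real)" where
  "rel G x y = (if G = Euc then vsub x y else x)"

definition lincomb :: "nat set \<Rightarrow> (nat \<Rightarrow> real) \<Rightarrow> (nat \<Rightarrow> nat \<Rightarrow> real) \<Rightarrow> (nat \<Rightarrow> real)" where
  "lincomb I c v = (\<lambda>i. \<Sum>s\<in>I. c s * v s i)"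

text \<open>Non-degeneracy of the (n-1)-simplex with vertices v 0, ..., v (n-1):
affine independence in E^n, linear independence in S^n and Lambda^n.\<close>
definition nondeg :: "geom \<Rightarrow> nat \<Rightarrow> (nat \<Rightarrow> nat \<Rightarrow> real) \<Rightarrow> bool" where
  "nondeg G n v \<longleftrightarrow>
     (\<forall>c. lincomb {..<n} c v = (\<lambda>_. 0) \<and> (G = Euc \<longrightarrow> (\<Sum>s<n. c s) = 0)
          \<longrightarrow> (\<forall>s<n. c s = 0))"

definition inTan :: "geom \<Rightarrow> nat \<Rightarrow> (nat \<Rightarrow> nat \<Rightarrow> real) \<Rightarrow> (nat \<Rightarrow> real) \<Rightarrow> bool" where
  "inTan G n v w \<longleftrightarrow>
     (\<exists>c. w = lincomb {..<n} c v \<and> (G = Euc \<longrightarrow> (\<Sum>s<n. c s) = 0))"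

definition oth :: "nat \<Rightarrow> nat" where
  "oth i = (if i = 0 then 1 else 0)"

text \<open>Unit tangent vector to the simplex v, orthogonal to its face opposite v i,
pointing into the simplex.\<close>
definition nrm :: "geom \<Rightarrow> nat \<Rightarrow> (nat \<Rightarrow> nat \<Rightarrow> real) \<Rightarrow> nat \<Rightarrow> (nat \<Rightarrow> real)" where
  "nrm G n v i = (THE w. inTan G n v w \<and> form G n w w = 1 \<and>
       (\<forall>s<n. s \<noteq> i \<longrightarrow> form G n w (rel G (v s) (v (oth i))) = 0) \<and>
       form G n w (rel G (v i) (v (oth i))) > 0)"

text \<open>Dihedral angle of the simplex v at the codimension-2 face spanned by the
vertices other than v i and v j (i.e. between its faces opposite v i and v j).\<close>
definition dih :: "geom \<Rightarrow> nat \<Rightarrow> (nat \<Rightarrow> nat \<Rightarrow> real) \<Rightarrow> nat \<Rightarrow> nat \<Rightarrow> real" where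
  "dih G n v i j = arccos (- form G n (nrm G n v i) (nrm G n v j))"

definition planeI :: "geom \<Rightarrow> nat \<Rightarrow> (nat \<Rightarrow> nat \<Rightarrow> real) \<Rightarrow> nat set \<Rightarrow> (nat \<Rightarrow> real) set" where
  "planeI G n v I = {y. isPt G n y \<and>
       (\<exists>c. y = lincomb I c v \<and> (G = Euc \<longrightarrow> (\<Sum>s\<in>I. c s) = 1))}"

definition facetP :: "(nat \<Rightarrow> nat \<Rightarrow> real) \<Rightarrow> (nat \<Rightarrow> nat \<Rightarrow> real) \<Rightarrow> nat \<Rightarrow> (nat \<Rightarrow> nat \<Rightarrow> real)" where
  "facetP a b p = a(p := b p)"

definition facetPQ :: "(nat \<Rightarrow> nat \<Rightarrow> real) \<Rightarrow> (nat \<Rightarrow> nat \<Rightarrow> real) \<Rightarrow> nat \<Rightarrow> nat \<Rightarrow> (nat \<Rightarrow> nat \<Rightarrow> real)" where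
  "facetPQ a b p q = a(p := b p, q := b q)"

text \<open>b_p^0: the position of b_p when phi_p = 0, i.e. the point of the plane of
Delta with the same distances to the vertices of F_p as b_p, on the same side
of F_p as Delta.\<close>
definition bzero :: "geom \<Rightarrow> nat \<Rightarrow> (nat \<Rightarrow> nat \<Rightarrow> real) \<Rightarrow> (nat \<Rightarrow> nat \<Rightarrow> real) \<Rightarrow> nat \<Rightarrow> (nat \<Rightarrow> real)" where
  "bzero G n a b p = (THE y. y \<in> planeI G n a {..<n} \<and>
       (\<forall>r<n. r \<noteq> p \<longrightarrow> gdist G n y (a r) = gdist G n (b p) (a r)) \<and>
       form G n (nrm G n a p) (rel G y (a (oth p))) > 0)"

definition altitude :: "geom \<Rightarrow> nat \<Rightarrow> (nat \<Rightarrow> nat \<Rightarrow> real) \<Rightarrow> (nat \<Rightarrow> nat \<Rightarrow> real) \<Rightarrow> nat \<Rightarrow> real" where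
  "altitude G n a b p = Inf ((\<lambda>y. gdist G n (b p) y) ` planeI G n a ({..<n} - {p}))"

definition betaP :: "geom \<Rightarrow> nat \<Rightarrow> (nat \<Rightarrow> nat \<Rightarrow> real) \<Rightarrow> (nat \<Rightarrow> nat \<Rightarrow> real) \<Rightarrow> nat \<Rightarrow> real" where
  "betaP G n a b p = (case G of
       Euc \<Rightarrow> altitude G n a b p
     | Sph \<Rightarrow> sin (altitude G n a b p)
     | Hyp \<Rightarrow> sinh (altitude G n a b p))"

definition gG :: "geom \<Rightarrow> nat \<Rightarrow> (nat \<Rightarrow> nat \<Rightarrow> real) \<Rightarrow> nat \<Rightarrow> nat \<Rightarrow> real" where
  "gG G n a p q = form G n (nrm G n a p) (nrm G n a q)"

text \<open>h_pq = beta_p^{-1} (b_p^0 - a_r, n_q) (r \<noteq> q) for E^n, beta_p^{-1} (b_p^0, n_q) otherwise.\<close>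
definition hH :: "geom \<Rightarrow> nat \<Rightarrow> (nat \<Rightarrow> nat \<Rightarrow> real) \<Rightarrow> (nat \<Rightarrow> nat \<Rightarrow> real) \<Rightarrow> nat \<Rightarrow> nat \<Rightarrow> real" where
  "hH G n a b p q = form G n (rel G (bzero G n a b p) (a (oth q))) (nrm G n a q) / betaP G n a b p"

definition eE :: "geom \<Rightarrow> nat \<Rightarrow> (nat \<Rightarrow> nat \<Rightarrow> real) \<Rightarrow> (nat \<Rightarrow> nat \<Rightarrow> real) \<Rightarrow> nat \<Rightarrow> nat \<Rightarrow> real" where
  "eE G n a b p q = (let l = gdist G n (b p) (b q);
       d = gdist G n (bzero G n a b p) (bzero G n a b q) in
     1 / (2 * betaP G n a b p * betaP G n a b q) *
     (case G of
        Euc \<Rightarrow> - (1/2) * l\<^sup>2 + (1/2) * d\<^sup>2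
      | Sph \<Rightarrow> cos l - cos d
      | Hyp \<Rightarrow> - cosh l + cosh d))"

definition crossPolytope :: "geom \<Rightarrow> nat \<Rightarrow> (nat \<Rightarrow> nat \<Rightarrow> real) \<Rightarrow> (nat \<Rightarrow> nat \<Rightarrow> real) \<Rightarrow> bool" where
  "crossPolytope G n a b \<longleftrightarrow>
     (\<forall>i<n. isPt G n (a i) \<and> isPt G n (b i)) \<and>
     (\<forall>c :: nat \<Rightarrow> bool. nondeg G n (\<lambda>i. if c i then b i else a i))"

end

theory Submission
  imports Defs
begin

definition vadd :: "(nat \<Rightarrow> real) \<Rightarrow> (nat \<Rightarrow> real) \<Rightarrow> (nat \<Rightarrow> real)" where
  "vadd x y = (\<lambda>i. x i + y i)"
definition vsc :: "real \<Rightarrow> (nat \<Rightarrow> real) \<Rightarrow> (nat \<Rightarrow> real)" where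
  "vsc c x = (\<lambda>i. c * x i)"

definition wt :: "geom \<Rightarrow> nat \<Rightarrow> nat \<Rightarrow> real" where
  "wt G n i = (if G = Hyp \<and> i = amb G n - 1 then -1 else 1)"

lemma form_wt: "form G n x y = (\<Sum>i<amb G n. wt G n i * x i * y i)"
proof (cases "G = Hyp")
  case True
  have N: "amb G n = Suc n" using True by (simp add: amb_def)
  have "(\<Sum>i<Suc n. wt G n i * x i * y i) = (\<Sum>i<n. x i * y i) - x n * y n"
    using True N by (simp add: wt_def)
  moreover have "form G n x y = (\<Sum>i<n. x i * y i) + x n * y n - 2 * x n * y n"
    using True N by (simp add: form_def Let_def)
  ultimately show ?thesis using N by simp
next
  case False
  then show ?thesis by (simp add: form_def wt_def Let_def)
qed

lemma form_sym: "form G n x y = form G n y x"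
  unfolding form_wt by (simp add: mult.commute mult.left_commute)

lemma form_add_l: "form G n (vadd x y) z = form G n x z + form G n y z"
  unfolding form_wt vadd_def by (simp add: algebra_simps sum.distrib)
lemma form_add_r: "form G n z (vadd x y) = form G n z x + form G n z y"
  by (metis form_add_l form_sym)
lemma form_sub_l: "form G n (vsub x y) z = form G n x z - form G n y z"
  unfolding form_wt vsub_def by (simp add: algebra_simps sum_subtractf)
lemma form_sub_r: "form G n z (vsub x y) = form G n z x - form G n z y"
  by (metis form_sub_l form_sym)
lemma form_sc_l: "form G n (vsc c x) z = c * form G n x z"
  unfolding form_wt vsc_def by (simp add: algebra_simps sum_distrib_left)
lemma form_sc_r: "form G n z (vsc c x) = c * form G n z x"
  by (metis form_sc_l form_sym)
lemma form_zero_l[simp]: "form G n (\<lambda>_. 0) z = 0"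
  unfolding form_wt by simp
lemma form_zero_r[simp]: "form G n z (\<lambda>_. 0) = 0"
  unfolding form_wt by simp
lemma form_lincomb_l: "finite I \<Longrightarrow> form G n (lincomb I c v) z = (\<Sum>s\<in>I. c s * form G n (v s) z)"
  unfolding form_wt lincomb_def
  by (simp add: sum_distrib_left sum_distrib_right mult.assoc mult.left_commute sum.swap[of _ I])
lemma form_lincomb_r: "finite I \<Longrightarrow> form G n z (lincomb I c v) = (\<Sum>s\<in>I. c s * form G n z (v s))"
  by (simp add: form_lincomb_l form_sym[of _ _ z])

lemmas form_lin = form_add_l form_add_r form_sub_l form_sub_r form_sc_l form_sc_r

definition spn :: "nat set \<Rightarrow> (nat \<Rightarrow> nat \<Rightarrow> real) \<Rightarrow> (nat \<Rightarrow> real) \<Rightarrow> bool" where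
  "spn I V x \<longleftrightarrow> (\<exists>c. x = lincomb I c V)"

lemma spn_zero: "spn I V (\<lambda>_. 0)"
  unfolding spn_def lincomb_def by (rule exI[of _ "\<lambda>_. 0"]) simp

lemma spn_gen: "finite I \<Longrightarrow> s \<in> I \<Longrightarrow> spn I V (V s)"
proof -
  assume "finite I" "s \<in> I"
  then have "V s = lincomb I (\<lambda>t. if t = s then 1 else 0) V"
    unfolding lincomb_def by (auto simp: fun_eq_iff if_distrib[of "\<lambda>c. c * _"] sum.delta cong: if_cong)
  then show ?thesis unfolding spn_def by blast
qed

lemma spn_add: "spn I V x \<Longrightarrow> spn I V y \<Longrightarrow> spn I V (vadd x y)"
proof -
  assume "spn I V x" "spn I V y"
  then obtain c d where "x = lincomb I c V" "y = lincomb I d V" by (auto simp: spn_def)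
  then have "vadd x y = lincomb I (\<lambda>s. c s + d s) V"
    unfolding lincomb_def vadd_def by (simp add: algebra_simps sum.distrib)
  then show ?thesis unfolding spn_def by blast
qed

lemma spn_sc: "spn I V x \<Longrightarrow> spn I V (vsc c x)"
proof -
  assume "spn I V x"
  then obtain d where "x = lincomb I d V" by (auto simp: spn_def)
  then have "vsc c x = lincomb I (\<lambda>s. c * d s) V"
    unfolding lincomb_def vsc_def by (simp add: algebra_simps sum_distrib_left)
  then show ?thesis unfolding spn_def by blast
qed

lemma spn_sub: "spn I V x \<Longrightarrow> spn I V y \<Longrightarrow> spn I V (vsub x y)"
proof -
  assume "spn I V x" "spn I V y"
  then obtain c d where "x = lincomb I c V" "y = lincomb I d V" by (auto simp: spn_def)
  then have "vsub x y = lincomb I (\<lambda>s. c s - d s) V"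
    unfolding lincomb_def vsub_def by (simp add: algebra_simps sum_subtractf)
  then show ?thesis unfolding spn_def by blast
qed

lemma spn_mono: "finite J \<Longrightarrow> I \<subseteq> J \<Longrightarrow> spn I V x \<Longrightarrow> spn J V x"
proof -
  assume fin: "finite J" and IJ: "I \<subseteq> J" and "spn I V x"
  then obtain c where x: "x = lincomb I c V" by (auto simp: spn_def)
  have "lincomb J (\<lambda>s. if s \<in> I then c s else 0) V = lincomb I c V"
    unfolding lincomb_def using fin IJ
    by (auto simp: fun_eq_iff if_distrib[of "\<lambda>c. c * _"] sum.If_cases Int_absorb1 cong: if_cong)
  then show ?thesis using x unfolding spn_def by metis
qed

lemma spn_cong: "(\<And>s. s \<in> I \<Longrightarrow> V s = V' s) \<Longrightarrow> spn I V x = spn I V' x"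
  unfolding spn_def lincomb_def by (simp cong: sum.cong)

lemma inV_lincomb: "(\<And>s. s \<in> I \<Longrightarrow> inV N (V s)) \<Longrightarrow> inV N (lincomb I c V)"
  unfolding inV_def lincomb_def by simp

lemma inV_spn: "(\<And>s. s \<in> I \<Longrightarrow> inV N (V s)) \<Longrightarrow> spn I V x \<Longrightarrow> inV N x"
  unfolding spn_def using inV_lincomb by blast

lemma inV_vsub: "inV N x \<Longrightarrow> inV N y \<Longrightarrow> inV N (vsub x y)"
  unfolding inV_def vsub_def by simp
lemma inV_vadd: "inV N x \<Longrightarrow> inV N y \<Longrightarrow> inV N (vadd x y)"
  unfolding inV_def vadd_def by simp
lemma inV_vsc: "inV N x \<Longrightarrow> inV N (vsc c x)"
  unfolding inV_def vsc_def by simp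
lemma inV_zero: "inV N (\<lambda>_. 0)" unfolding inV_def by simp

lemma orth_spn: "finite I \<Longrightarrow> (\<And>t. t \<in> I \<Longrightarrow> form G n z (V t) = 0) \<Longrightarrow> spn I V y \<Longrightarrow> form G n z y = 0"
  unfolding spn_def by (auto simp: form_lincomb_r)

section \<open>Positivity\<close>

lemma form_nonneg_E: "G \<noteq> Hyp \<Longrightarrow> form G n x x \<ge> 0"
  unfolding form_wt wt_def by (auto intro!: sum_nonneg)

lemma form_zero_E: "G \<noteq> Hyp \<Longrightarrow> inV (amb G n) x \<Longrightarrow> form G n x x = 0 \<Longrightarrow> x = (\<lambda>_. 0)"
proof -
  assume G: "G \<noteq> Hyp" and iv: "inV (amb G n) x" and z: "form G n x x = 0"
  have "(\<Sum>i<amb G n. x i * x i) = 0" using z G unfolding form_wt wt_def by simp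
  then have "\<forall>i\<in>{..<amb G n}. x i * x i = 0"
    by (subst sum_nonneg_eq_0_iff[symmetric]) auto
  then show ?thesis using iv unfolding inV_def by (auto simp: fun_eq_iff) (metis not_le lessThan_iff)
qed

definition S :: "nat \<Rightarrow> (nat \<Rightarrow> real) \<Rightarrow> (nat \<Rightarrow> real) \<Rightarrow> real" where
  "S n x y = (\<Sum>i<n. x i * y i)"

lemma form_H: "form Hyp n x y = S n x y - x n * y n"
  unfolding form_def S_def amb_def Let_def by simp

lemma S_nonneg: "S n x x \<ge> 0" unfolding S_def by (auto intro!: sum_nonneg)

lemma S_CS: "S n x y \<le> sqrt (S n x x) * sqrt (S n y y)"
proof -
  have "S n x y \<le> (\<Sum>i<n. \<bar>x i\<bar> * \<bar>y i\<bar>)" unfolding S_def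
    by (rule sum_mono) (metis abs_ge_self abs_mult)
  also have "\<dots> \<le> L2_set x {..<n} * L2_set y {..<n}" by (rule L2_set_mult_ineq)
  also have "\<dots> = sqrt (S n x x) * sqrt (S n y y)"
    unfolding L2_set_def S_def by (simp add: power2_eq_square)
  finally show ?thesis .
qed

lemma S_CS2: "(S n x y)^2 \<le> S n x x * S n y y"
proof -
  have "\<bar>S n x y\<bar> \<le> sqrt (S n x x) * sqrt (S n y y)"
    using S_CS[of n x y] S_CS[of n "\<lambda>i. - x i" y]
    by (simp add: S_def sum_negf abs_le_iff)
  then have "\<bar>S n x y\<bar>^2 \<le> (sqrt (S n x x) * sqrt (S n y y))^2"
    by (rule power_mono) simp
  then show ?thesis using S_nonneg[of n x] S_nonneg[of n y] by (simp add: power_mult_distrib del: real_sqrt_mult)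
qed

lemma S_zero: "S n x x = 0 \<Longrightarrow> i < n \<Longrightarrow> x i = 0"
proof -
  assume "S n x x = 0" "i < n"
  then have "\<forall>i\<in>{..<n}. x i * x i = 0" unfolding S_def
    by (subst sum_nonneg_eq_0_iff[symmetric]) auto
  then show ?thesis using \<open>i < n\<close> by simp
qed

lemma hyp_orth:
  assumes xt: "form Hyp n x x < 0" and zx: "form Hyp n z x = 0"
  shows "form Hyp n z z \<ge> 0" and "form Hyp n z z = 0 \<Longrightarrow> inV (Suc n) z \<Longrightarrow> z = (\<lambda>_. 0)"
proof -
  let ?a = "S n x x" and ?b = "S n z z" and ?t = "x n" and ?s = "z n"
  have A: "?a < ?t^2" using xt by (simp add: form_H power2_eq_square)
  have a0: "?a \<ge> 0" "?b \<ge> 0" by (rule S_nonneg)+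
  have t0: "?t^2 > 0" using A a0 by linarith
  have zx': "S n z x = ?s * ?t" using zx by (simp add: form_H)
  have cs: "(?s * ?t)^2 \<le> ?b * ?a" using S_CS2[of n z x] zx' by simp
  have "?b * ?a \<le> ?b * ?t^2" using A a0 by (simp add: mult_left_mono)
  then have 1: "?s^2 * ?t^2 \<le> ?b * ?t^2" using cs by (simp add: power_mult_distrib)
  then have sb: "?s^2 \<le> ?b" using t0 by simp
  then show "form Hyp n z z \<ge> 0" by (simp add: form_H power2_eq_square)
  assume zz: "form Hyp n z z = 0" and iv: "inV (Suc n) z"
  have eq: "?b = ?s^2" using zz by (simp add: form_H power2_eq_square)
  have "?b = 0"
  proof (rule ccontr)
    assume "?b \<noteq> 0" then have "?b > 0" using a0 by simp
    then have "?b * ?a < ?b * ?t^2" using A by simp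
    then have "?s^2 * ?t^2 < ?b * ?t^2" using cs by (simp add: power_mult_distrib)
    then show False using eq by simp
  qed
  then have s0: "?s = 0" using eq by simp
  show "z = (\<lambda>_. 0)"
  proof
    fix i show "z i = 0"
      using S_zero[OF \<open>?b = 0\<close>, of i] s0 iv unfolding inV_def
      by (cases "i < n"; cases "i = n") auto
  qed
qed

lemma isPt_Hyp: "isPt Hyp n x \<longleftrightarrow> inV (Suc n) x \<and> form Hyp n x x = -1 \<and> x n > 0"
  unfolding isPt_def amb_def by simp

lemma hyp_time: "isPt Hyp n x \<Longrightarrow> x n = sqrt (1 + S n x x)"
proof -
  assume "isPt Hyp n x"
  then have "S n x x - x n * x n = -1" "x n > 0" by (auto simp: isPt_Hyp form_H)
  then have "(x n)^2 = 1 + S n x x" "x n \<ge> 0" by (auto simp: power2_eq_square)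
  then show ?thesis by (metis real_sqrt_unique)
qed

lemma fut_le: assumes "isPt Hyp n x" "isPt Hyp n y" shows "form Hyp n x y \<le> -1"
proof -
  let ?a = "sqrt (S n x x)" and ?b = "sqrt (S n y y)"
  have a: "?a \<ge> 0" "?b \<ge> 0" using S_nonneg[of n x] S_nonneg[of n y] by simp_all
  have tx: "x n = sqrt (1 + ?a^2)" using hyp_time[OF assms(1)] S_nonneg[of n x] by simp
  have ty: "y n = sqrt (1 + ?b^2)" using hyp_time[OF assms(2)] S_nonneg[of n y] by simp
  have gen: "\<And>u v::real. (1 + u * v)^2 \<le> (1 + u^2) * (1 + v^2)"
  proof -
    fix u v :: real have "0 \<le> (u - v)^2" by simp
    then show "(1 + u * v)^2 \<le> (1 + u^2) * (1 + v^2)" by (simp add: power2_eq_square algebra_simps)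
  qed
  have "(1 + ?a * ?b)^2 \<le> (1 + ?a^2) * (1 + ?b^2)" by (rule gen)
  then have "1 + ?a * ?b \<le> sqrt ((1 + ?a^2) * (1 + ?b^2))"
    using a by (simp add: real_le_rsqrt)
  then have "1 + ?a * ?b \<le> x n * y n" using tx ty by (simp add: real_sqrt_mult)
  moreover have "S n x y \<le> ?a * ?b" by (rule S_CS)
  ultimately show ?thesis by (simp add: form_H)
qed

lemma fut_dir:
  assumes m: "form Hyp n m m < 0" and a: "isPt Hyp n a" and ma: "form Hyp n m a < 0"
  shows "m n > 0"
proof (rule ccontr)
  assume "\<not> m n > 0"
  then have mn: "m n \<le> 0" by simp
  have "m n \<noteq> 0"
  proof
    assume "m n = 0"
    then have "form Hyp n m m = S n m m" by (simp add: form_H)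
    then show False using m S_nonneg[of n m] by simp
  qed
  then have mn': "m n < 0" using mn by simp
  let ?k = "sqrt (- form Hyp n m m)"
  have k: "?k > 0" using m by simp
  let ?y = "vsc (- 1 / ?k) m"
  have iv: "inV (Suc n) (vsc (-1/?k) m) = inV (Suc n) m" unfolding inV_def vsc_def using k by auto
  have "form Hyp n ?y ?y = (1/?k^2) * form Hyp n m m" by (simp add: form_lin power2_eq_square)
  also have "\<dots> = -1" using m k by (simp add: field_simps)
  finally have yy: "form Hyp n ?y ?y = -1" .
  have "?y n > 0" using mn' k by (simp add: vsc_def field_simps)
  have "form Hyp n ?y a = (-1/?k) * form Hyp n m a" by (simp add: form_lin)
  also have "\<dots> > 0" using ma k by (simp add: field_simps)
  finally have pos: "form Hyp n ?y a > 0" .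
  have "form Hyp n ?y a \<le> -1"
  proof -
    let ?z = "\<lambda>i. if i \<le> n then ?y i else 0"
    have zz: "form Hyp n ?z ?z = form Hyp n ?y ?y" "form Hyp n ?z a = form Hyp n ?y a"
      by (auto simp: form_H S_def intro!: sum.cong)
    have "isPt Hyp n ?z" using yy zz \<open>?y n > 0\<close> unfolding isPt_Hyp inV_def by auto
    then have "form Hyp n ?z a \<le> -1" using fut_le a by blast
    then show ?thesis using zz by simp
  qed
  then show False using pos by simp
qed

lemma rev_CS:
  assumes m: "form Hyp n m m < 0" "m n > 0" and y: "isPt Hyp n y"
  shows "- form Hyp n m y \<ge> sqrt (- form Hyp n m m)"
proof -
  let ?k = "sqrt (- form Hyp n m m)"
  have k: "?k > 0" using m by simp
  let ?z = "\<lambda>i. if i \<le> n then m i / ?k else 0"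
  have zm: "form Hyp n ?z ?z = form Hyp n m m / ?k^2" "form Hyp n ?z y = form Hyp n m y / ?k"
    by (auto simp: form_H S_def sum_divide_distrib diff_divide_distrib power2_eq_square intro!: sum.cong)
  have "?k^2 = - form Hyp n m m" using m by simp
  then have "form Hyp n ?z ?z = -1" using zm k m by (simp add: field_simps)
  then have "isPt Hyp n ?z" using k m unfolding isPt_Hyp inV_def by auto
  then have "form Hyp n ?z y \<le> -1" using fut_le y by blast
  then have "form Hyp n m y / ?k \<le> -1" using zm by simp
  then have "form Hyp n m y \<le> - ?k" using k by (simp add: field_simps)
  then show ?thesis by simp
qed

definition projok :: "geom \<Rightarrow> nat \<Rightarrow> nat set \<Rightarrow> (nat \<Rightarrow> nat \<Rightarrow> real) \<Rightarrow> ((nat \<Rightarrow> real) \<Rightarrow> (nat \<Rightarrow> real)) \<Rightarrow> bool" where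
  "projok G n J V Pr \<longleftrightarrow> (\<forall>x. spn J V (Pr x) \<and> (\<forall>t\<in>J. form G n (vsub x (Pr x)) (V t) = 0))"

lemma vsub_zero[simp]: "vsub x (\<lambda>_. 0) = x" unfolding vsub_def by simp

lemma proj_empty: "projok G n {} V (\<lambda>x. \<lambda>_. 0)"
  unfolding projok_def by (simp add: spn_zero)

lemma form_vsub_vadd: "form G n (vsub x (vadd a (vsc m e))) y = form G n x y - form G n a y - m * form G n e y"
  unfolding vsub_def vadd_def vsc_def form_wt by (simp add: algebra_simps sum_subtractf sum.distrib sum_distrib_left)

lemma proj_step:
  assumes fin: "finite J" and P: "projok G n J V Pr" and j: "j \<notin> J"
    and ee: "form G n (vsub (V j) (Pr (V j))) (vsub (V j) (Pr (V j))) \<noteq> 0"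
  shows "\<exists>Pr'. projok G n (insert j J) V Pr'"
proof -
  define e where "e = vsub (V j) (Pr (V j))"
  have ee': "form G n e e \<noteq> 0" using ee e_def by simp
  define Pr' where "Pr' = (\<lambda>x. vadd (Pr x) (vsc (form G n (vsub x (Pr x)) e / form G n e e) e))"
  have finI: "finite (insert j J)" using fin by simp
  have eJ: "\<And>t. t \<in> J \<Longrightarrow> form G n e (V t) = 0" using P unfolding projok_def e_def by blast
  have espn: "spn (insert j J) V e" unfolding e_def
    by (rule spn_sub, rule spn_gen[OF finI], simp, rule spn_mono[OF finI], auto) (use P projok_def in blast)
  have "projok G n (insert j J) V Pr'"
    unfolding projok_def
  proof (intro allI conjI ballI)
    fix x
    have "spn J V (Pr x)" using P projok_def by blast
    then have "spn (insert j J) V (Pr x)" by (intro spn_mono[OF finI, of J]) auto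
    then show "spn (insert j J) V (Pr' x)" unfolding Pr'_def by (intro spn_add spn_sc espn)
    define d where "d = vsub x (Pr x)"
    have dJ: "\<And>t. t \<in> J \<Longrightarrow> form G n d (V t) = 0" using P unfolding projok_def d_def by blast
    fix t assume t: "t \<in> insert j J"
    have red: "form G n (vsub x (Pr' x)) (V t) = form G n d (V t) - (form G n d e / form G n e e) * form G n e (V t)"
      unfolding Pr'_def d_def by (simp add: form_sub_l form_add_l form_sc_l)
    show "form G n (vsub x (Pr' x)) (V t) = 0"
    proof (cases "t \<in> J")
      case True then show ?thesis using red dJ eJ by simp
    next
      case False
      then have tj: "t = j" using t by simp
      have sp: "spn J V (Pr (V j))" using P projok_def by blast
      have d1: "form G n d (V j) = form G n d e"
      proof -
        have "form G n d e = form G n d (V j) - form G n d (Pr (V j))" unfolding e_def by (simp add: form_sub_r)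
        moreover have "form G n d (Pr (V j)) = 0" by (rule orth_spn[OF fin dJ sp])
        ultimately show ?thesis by simp
      qed
      have e1: "form G n e (V j) = form G n e e"
      proof -
        have "form G n e e = form G n e (V j) - form G n e (Pr (V j))" unfolding e_def by (simp add: form_sub_r)
        moreover have "form G n e (Pr (V j)) = 0" by (rule orth_spn[OF fin eJ sp])
        ultimately show ?thesis by simp
      qed
      show ?thesis using red d1 e1 tj ee' by simp
    qed
  qed
  then show ?thesis by blast
qed

definition indep :: "nat set \<Rightarrow> (nat \<Rightarrow> nat \<Rightarrow> real) \<Rightarrow> bool" where
  "indep J V \<longleftrightarrow> (\<forall>c. lincomb J c V = (\<lambda>_. 0) \<longrightarrow> (\<forall>s\<in>J. c s = 0))"

lemma indep_not_in_spn:
  assumes fin: "finite J" and ind: "indep J V" and K: "K \<subseteq> J" and j: "j \<in> J" "j \<notin> K"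
  shows "\<not> spn K V (V j)"
proof
  assume "spn K V (V j)"
  then obtain c where c: "V j = lincomb K c V" unfolding spn_def by blast
  define c' where "c' = (\<lambda>s. if s = j then -1 else if s \<in> K then c s else 0)"
  have finK: "finite K" using fin K finite_subset by blast
  have "lincomb J c' V = (\<lambda>_. 0)"
  proof
    fix i
    have "(\<Sum>s\<in>J. c' s * V s i) = (\<Sum>s\<in>insert j K. c' s * V s i)"
      by (rule sum.mono_neutral_right) (use fin K j in \<open>auto simp: c'_def\<close>)
    also have "\<dots> = - V j i + (\<Sum>s\<in>K. c s * V s i)"
      using j finK by (auto simp: c'_def intro!: sum.cong)
    also have "\<dots> = 0" using c unfolding lincomb_def by (simp add: fun_eq_iff)
    finally show "lincomb J c' V i = 0" unfolding lincomb_def .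
  qed
  then have "c' j = 0" using ind j unfolding indep_def by blast
  then show False unfolding c'_def by simp
qed

lemma proj_exists:
  assumes fin: "finite J" and ind: "indep J V" and iv: "\<And>s. s \<in> J \<Longrightarrow> inV (amb G n) (V s)"
    and hyp: "G = Hyp \<Longrightarrow> r0 \<in> J \<and> form G n (V r0) (V r0) < 0"
  shows "\<exists>Pr. projok G n J V Pr"
proof -
  define B where "B = (if G = Hyp then {r0} else {})"
  have BJ: "B \<subseteq> J" using hyp B_def by auto
  have base: "\<exists>Pr. projok G n B V Pr"
  proof (cases "G = Hyp")
    case True
    have "\<exists>Pr. projok G n (insert r0 {}) V Pr"
      by (rule proj_step[OF _ proj_empty]) (use hyp True in auto)
    then show ?thesis using True B_def by simp
  next
    case False then show ?thesis using proj_empty B_def by auto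
  qed
  have "\<And>K. finite K \<Longrightarrow> K \<subseteq> J \<Longrightarrow> \<exists>Pr. projok G n (B \<union> K) V Pr"
  proof -
    fix K :: "nat set" assume "finite K" "K \<subseteq> J"
    then show "\<exists>Pr. projok G n (B \<union> K) V Pr"
    proof (induction K rule: finite_induct)
      case empty then show ?case using base by simp
    next
      case (insert j K)
      then obtain Pr where P: "projok G n (B \<union> K) V Pr" by auto
      show ?case
      proof (cases "j \<in> B")
        case True then show ?thesis using P by (metis Un_insert_right insert_absorb2 insert_absorb Un_iff)
      next
        case False
        have jn: "j \<notin> B \<union> K" using False insert by simp
        have BK: "B \<union> K \<subseteq> J" using BJ insert by simp
        have finBK: "finite (B \<union> K)" using insert B_def by simp
        define e where "e = vsub (V j) (Pr (V j))"
        have sp: "spn (B \<union> K) V (Pr (V j))" using P projok_def by blast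
        have enz: "e \<noteq> (\<lambda>_. 0)"
        proof
          assume "e = (\<lambda>_. 0)"
          then have "V j = Pr (V j)" unfolding e_def vsub_def by (simp add: fun_eq_iff)
          then have "spn (B \<union> K) V (V j)" using sp by simp
          then show False using indep_not_in_spn[OF fin ind BK] insert jn by simp
        qed
        have ivB: "\<And>s. s \<in> B \<union> K \<Longrightarrow> inV (amb G n) (V s)" using iv BK by auto
        have eiv: "inV (amb G n) e" unfolding e_def
          by (rule inV_vsub, rule iv) (use insert inV_spn[OF ivB sp] in auto)
        have "form G n e e \<noteq> 0"
        proof (cases "G = Hyp")
          case True
          have r0: "r0 \<in> B \<union> K" using True B_def by simp
          have orth: "form G n e (V r0) = 0" using P r0 unfolding projok_def e_def by blast
          have "form Hyp n (V r0) (V r0) < 0" using hyp True by simp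
          moreover have "inV (Suc n) e" using eiv True by (simp add: amb_def)
          ultimately show ?thesis using hyp_orth[of n "V r0" e] orth True enz by auto
        next
          case False then show ?thesis using form_zero_E[OF False eiv] enz by auto
        qed
        then have "\<exists>Pr'. projok G n (insert j (B \<union> K)) V Pr'"
          using proj_step[OF finBK P jn] e_def by simp
        then show ?thesis by simp
      qed
    qed
  qed
  from this[of J] fin BJ show ?thesis by (simp add: Un_absorb1)
qed

definition zz :: "geom \<Rightarrow> (nat \<Rightarrow> nat \<Rightarrow> real) \<Rightarrow> nat \<Rightarrow> (nat \<Rightarrow> real)" where
  "zz G a k = (if G = Euc then a k else (\<lambda>_. 0))"
definition sh :: "geom \<Rightarrow> (nat \<Rightarrow> nat \<Rightarrow> real) \<Rightarrow> nat \<Rightarrow> (nat \<Rightarrow> real) \<Rightarrow> (nat \<Rightarrow> real)" where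
  "sh G a k x = vsub x (zz G a k)"
definition JW :: "geom \<Rightarrow> nat \<Rightarrow> nat \<Rightarrow> nat \<Rightarrow> nat \<Rightarrow> nat set" where
  "JW G n p q k = {..<n} - {p, q} - (if G = Euc then {k} else {})"
definition Jn :: "geom \<Rightarrow> nat \<Rightarrow> nat \<Rightarrow> nat set" where
  "Jn G n k = {..<n} - (if G = Euc then {k} else {})"

locale CP =
  fixes G :: geom and n p q k :: nat and a b :: "nat \<Rightarrow> nat \<Rightarrow> real"
    and Pr :: "(nat \<Rightarrow> real) \<Rightarrow> (nat \<Rightarrow> real)"
  assumes n3: "n \<ge> 3" and pn: "p < n" and qn: "q < n" and pq: "p \<noteq> q"
    and cp: "crossPolytope G n a b"
    and on: "k < n" and op: "k \<noteq> p" and oq: "k \<noteq> q"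
    and Prok: "projok G n (JW G n p q k) (\<lambda>s. sh G a k (a s)) Pr"
begin

abbreviation "sv \<equiv> sh G a k"
abbreviation "N \<equiv> amb G n"
abbreviation "B \<equiv> form G n"
abbreviation "P x \<equiv> vsub x (Pr x)"

definition smp :: "(nat \<Rightarrow> nat \<Rightarrow> real) \<Rightarrow> bool" where
  "smp v \<longleftrightarrow> (\<forall>s<n. s \<notin> {p, q} \<longrightarrow> v s = a s) \<and> nondeg G n v \<and> (\<forall>s<n. isPt G n (v s))"

lemma JW_swap: "JW G n q p k = JW G n p q k" unfolding JW_def by (simp add: insert_commute)

lemma swap: "CP G n q p k a b Pr"
  apply unfold_locales
  using n3 pn qn pq cp on op oq Prok JW_swap by simp_all

lemma finJW: "finite (JW G n p q k)" unfolding JW_def by (rule finite_Diff)+ simp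
end

context CP begin

lemma ptA: "s < n \<Longrightarrow> isPt G n (a s)" using cp unfolding crossPolytope_def by blast
lemma ptB: "s < n \<Longrightarrow> isPt G n (b s)" using cp unfolding crossPolytope_def by blast
lemma ivPt: "isPt G n x \<Longrightarrow> inV N x" unfolding isPt_def by simp
lemma iv_zz: "inV N (zz G a k)" using ivPt[OF ptA[OF on]] by (cases "G = Euc") (simp_all add: zz_def inV_zero)
lemma iv_sv: "inV N x \<Longrightarrow> inV N (sv x)" unfolding sh_def by (rule inV_vsub[OF _ iv_zz])
lemma sv_E: "G = Euc \<Longrightarrow> sv x = vsub x (a k)" unfolding sh_def zz_def by simp
lemma sv_nE: "G \<noteq> Euc \<Longrightarrow> sv x = x" unfolding sh_def zz_def by simp
lemma sv_ak: "G = Euc \<Longrightarrow> sv (a k) = (\<lambda>_. 0)" unfolding sh_def zz_def vsub_def by simp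
lemma JW_sub: "JW G n p q k \<subseteq> {..<n}" unfolding JW_def by auto
lemma finJn: "finite (Jn G n k)" unfolding Jn_def by simp

lemma spn_Pr: "spn (JW G n p q k) (\<lambda>s. sv (a s)) (Pr x)" using Prok unfolding projok_def by blast

lemma iv_Pr: "inV N (Pr x)"
  by (rule inV_spn[OF _ spn_Pr]) (use JW_sub ivPt ptA iv_sv in blast)

lemma iv_P: "inV N x \<Longrightarrow> inV N (P x)" by (rule inV_vsub[OF _ iv_Pr])

lemma P_orth: "t < n \<Longrightarrow> t \<notin> {p, q} \<Longrightarrow> B (P x) (sv (a t)) = 0"
proof -
  assume t: "t < n" "t \<notin> {p, q}"
  show ?thesis
  proof (cases "t \<in> JW G n p q k")
    case True then show ?thesis using Prok unfolding projok_def by blast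
  next
    case False then have "G = Euc" "t = k" using t unfolding JW_def by (auto split: if_splits)
    then show ?thesis using sv_ak by simp
  qed
qed

definition Wperp :: "(nat \<Rightarrow> real) \<Rightarrow> bool" where
  "Wperp z \<longleftrightarrow> (\<forall>t<n. t \<notin> {p, q} \<longrightarrow> B z (sv (a t)) = 0)"

lemma Wperp_P: "Wperp (P x)" unfolding Wperp_def using P_orth by blast

lemma Wperp_lin: "Wperp x \<Longrightarrow> Wperp y \<Longrightarrow> Wperp (vsub x y)" "Wperp x \<Longrightarrow> Wperp y \<Longrightarrow> Wperp (vadd x y)"
  "Wperp x \<Longrightarrow> Wperp (vsc c x)"
  unfolding Wperp_def by (simp_all add: form_lin)

lemma Wperp_Pr: "Wperp z \<Longrightarrow> B z (Pr y) = 0"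
  by (rule orth_spn[OF finJW _ spn_Pr]) (use JW_sub Wperp_def JW_def in auto)

lemma orthW: assumes iv: "inV N z" and W: "Wperp z"
  shows "B z z \<ge> 0" and "B z z = 0 \<Longrightarrow> z = (\<lambda>_. 0)"
proof -
  have ok: "k < n" "k \<notin> {p,q}" using on op oq by auto
  have "B z z \<ge> 0 \<and> (B z z = 0 \<longrightarrow> z = (\<lambda>_. 0))"
  proof (cases "G = Hyp")
    case True
    have ak: "sv (a k) = a k" using True sv_nE by simp
    have "form Hyp n (a k) (a k) = -1" using ptA[OF on] True by (simp add: isPt_Hyp)
    moreover have "form Hyp n z (a k) = 0" using W ok ak True unfolding Wperp_def by auto
    moreover have "inV (Suc n) z" using iv True by (simp add: amb_def)
    ultimately show ?thesis using hyp_orth[of n "a k" z] True by auto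
  next
    case False then show ?thesis using form_nonneg_E form_zero_E iv by blast
  qed
  then show "B z z \<ge> 0" and "B z z = 0 \<Longrightarrow> z = (\<lambda>_. 0)" by auto
qed

lemma orthW_pos: "inV N z \<Longrightarrow> Wperp z \<Longrightarrow> z \<noteq> (\<lambda>_. 0) \<Longrightarrow> B z z > 0"
  using orthW by (metis order_le_less)

lemma nondeg_cp: "nondeg G n (\<lambda>i. if c i then b i else a i)" using cp unfolding crossPolytope_def by blast

lemma smp_a: "smp a"
  using nondeg_cp[of "\<lambda>_. False"] ptA unfolding smp_def by simp
lemma smp_Pp: "smp (facetP a b p)"
proof -
  have "facetP a b p = (\<lambda>i. if i = p then b i else a i)" unfolding facetP_def by (auto simp: fun_eq_iff)
  then show ?thesis using nondeg_cp[of "\<lambda>i. i = p"] ptA ptB unfolding smp_def by auto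
qed
lemma smp_Pq: "smp (facetP a b q)"
proof -
  have "facetP a b q = (\<lambda>i. if i = q then b i else a i)" unfolding facetP_def by (auto simp: fun_eq_iff)
  then show ?thesis using nondeg_cp[of "\<lambda>i. i = q"] ptA ptB unfolding smp_def by auto
qed
lemma smp_PQ: "smp (facetPQ a b p q)"
proof -
  have "facetPQ a b p q = (\<lambda>i. if i = p \<or> i = q then b i else a i)" unfolding facetPQ_def by (auto simp: fun_eq_iff)
  then show ?thesis using nondeg_cp[of "\<lambda>i. i = p \<or> i = q"] ptA ptB unfolding smp_def by auto
qed

lemma smp_k: "smp v \<Longrightarrow> v k = a k" using on op oq unfolding smp_def by auto
lemma smp_off: "smp v \<Longrightarrow> s < n \<Longrightarrow> s \<notin> {p,q} \<Longrightarrow> v s = a s" unfolding smp_def by auto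
lemma smp_pt: "smp v \<Longrightarrow> s < n \<Longrightarrow> isPt G n (v s)" unfolding smp_def by auto
lemma smp_iv: "smp v \<Longrightarrow> s < n \<Longrightarrow> inV N (sv (v s))" using smp_pt ivPt iv_sv by blast

lemma smp_indep: assumes v: "smp v" shows "indep (Jn G n k) (\<lambda>s. sv (v s))"
  unfolding indep_def
proof (intro allI impI ballI)
  fix c s assume lc: "lincomb (Jn G n k) c (\<lambda>s. sv (v s)) = (\<lambda>_. 0)" and s: "s \<in> Jn G n k"
  have nd: "nondeg G n v" using v smp_def by blast
  show "c s = 0"
  proof (cases "G = Euc")
    case True
    have J: "Jn G n k = {..<n} - {k}" using True Jn_def by simp
    define c' where "c' = (\<lambda>t. if t = k then - (\<Sum>u\<in>Jn G n k. c u) else c t)"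
    have split: "\<And>f. (\<Sum>t<n. f t) = f k + (\<Sum>t\<in>Jn G n k. f t)"
      using on J by (metis finite_lessThan lessThan_iff sum.remove)
    have vk: "v k = a k" using smp_k[OF v] .
    have "lincomb {..<n} c' v = (\<lambda>_. 0)"
    proof
      fix i
      have "lincomb {..<n} c' v i = - (\<Sum>u\<in>Jn G n k. c u) * v k i + (\<Sum>t\<in>Jn G n k. c t * v t i)"
        unfolding lincomb_def by (subst split) (auto simp: c'_def J intro!: sum.cong)
      also have "\<dots> = (\<Sum>t\<in>Jn G n k. c t * (v t i - a k i))"
        using vk by (simp add: algebra_simps sum_subtractf sum_distrib_right sum_distrib_left)
      also have "\<dots> = 0" using fun_cong[OF lc, of i] True unfolding lincomb_def sh_def zz_def vsub_def by simp
      finally show "lincomb {..<n} c' v i = 0" .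
    qed
    moreover have "(\<Sum>t<n. c' t) = 0" by (subst split) (auto simp: c'_def J intro!: sum.cong)
    ultimately have "\<forall>t<n. c' t = 0" using nd True unfolding nondeg_def by blast
    moreover have "s < n" "s \<noteq> k" using s J by auto
    ultimately show ?thesis unfolding c'_def by auto
  next
    case False
    have "lincomb {..<n} c v = (\<lambda>_. 0)" using lc False by (simp add: sv_nE Jn_def)
    then show ?thesis using nd s False unfolding nondeg_def Jn_def by auto
  qed
qed

lemma CORE: assumes v: "smp v" and z: "spn {..<n} (\<lambda>s. sv (v s)) z"
  and orth: "\<And>s. s < n \<Longrightarrow> B z (sv (v s)) = 0"
  shows "z = (\<lambda>_. 0)"
proof -
  have zz0: "B z z = 0" by (rule orth_spn[OF _ _ z]) (use orth in auto)
  have iv: "inV N z" by (rule inV_spn[OF _ z]) (use smp_iv[OF v] in auto)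
  show ?thesis
  proof (cases "G = Hyp")
    case True
    have ak: "sv (v k) = a k" using True sv_nE smp_k[OF v] by simp
    have "form Hyp n (a k) (a k) = -1" using ptA[OF on] True by (simp add: isPt_Hyp)
    moreover have "form Hyp n z (a k) = 0" using orth[OF on] ak True by simp
    moreover have "inV (Suc n) z" using iv True by (simp add: amb_def)
    ultimately show ?thesis using hyp_orth(2)[of n "a k" z] True zz0 by auto
  next
    case False then show ?thesis using form_zero_E iv zz0 by blast
  qed
qed

lemma spn_Pr_v: "smp v \<Longrightarrow> finite I \<Longrightarrow> JW G n p q k \<subseteq> I \<Longrightarrow> spn I (\<lambda>s. sv (v s)) (Pr x)"
proof -
  assume v: "smp v" and I: "finite I" "JW G n p q k \<subseteq> I"
  have "spn (JW G n p q k) (\<lambda>s. sv (v s)) (Pr x)"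
    using spn_Pr spn_cong[of "JW G n p q k" "\<lambda>s. sv (v s)" "\<lambda>s. sv (a s)"] smp_off[OF v]
    unfolding JW_def by auto
  then show ?thesis by (rule spn_mono[OF I(1) I(2)])
qed

lemma notspn: assumes v: "smp v" and i: "i \<in> {p,q}"
  shows "\<not> spn (Jn G n k - {i}) (\<lambda>s. sv (v s)) (sv (v i))"
  by (rule indep_not_in_spn[OF finJn smp_indep[OF v]]) (use i pn qn op oq in \<open>auto simp: Jn_def\<close>)

lemma JW_sub_Jn: "i \<in> {p,q} \<Longrightarrow> JW G n p q k \<subseteq> Jn G n k - {i}" unfolding JW_def Jn_def by auto

end

definition Rv :: "geom \<Rightarrow> nat \<Rightarrow> (nat \<Rightarrow> real) \<Rightarrow> (nat \<Rightarrow> real) \<Rightarrow> (nat \<Rightarrow> real)" where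
  "Rv G n X Y = vsub X (vsc (form G n X Y / form G n Y Y) Y)"
definition Nv :: "geom \<Rightarrow> nat \<Rightarrow> (nat \<Rightarrow> real) \<Rightarrow> (nat \<Rightarrow> real) \<Rightarrow> (nat \<Rightarrow> real)" where
  "Nv G n X Y = vsc (1 / sqrt (form G n (Rv G n X Y) (Rv G n X Y))) (Rv G n X Y)"

lemma Rv_Y: "form G n Y Y \<noteq> 0 \<Longrightarrow> form G n (Rv G n X Y) Y = 0"
  unfolding Rv_def by (simp add: form_lin)
lemma Rv_X: "form G n Y Y \<noteq> 0 \<Longrightarrow> form G n (Rv G n X Y) X = form G n X X - (form G n X Y)^2 / form G n Y Y"
  unfolding Rv_def by (simp add: form_lin form_sym[of G n Y X] power2_eq_square)
lemma Rv_R: "form G n Y Y \<noteq> 0 \<Longrightarrow> form G n (Rv G n X Y) (Rv G n X Y) = form G n X X - (form G n X Y)^2 / form G n Y Y"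
proof -
  assume Y: "form G n Y Y \<noteq> 0"
  have "form G n (Rv G n X Y) (Rv G n X Y) = form G n (Rv G n X Y) X - (form G n X Y / form G n Y Y) * form G n (Rv G n X Y) Y"
    by (subst (2) Rv_def) (simp add: form_lin)
  then show ?thesis using Rv_X[OF Y] Rv_Y[OF Y] by simp
qed

lemma Nv_Y: "form G n Y Y \<noteq> 0 \<Longrightarrow> form G n (Nv G n X Y) Y = 0"
  unfolding Nv_def by (simp add: form_lin Rv_Y)
lemma Nv_N: "form G n (Rv G n X Y) (Rv G n X Y) > 0 \<Longrightarrow> form G n (Nv G n X Y) (Nv G n X Y) = 1"
  unfolding Nv_def by (simp add: form_lin)
lemma Nv_X: "form G n Y Y \<noteq> 0 \<Longrightarrow> form G n (Rv G n X Y) (Rv G n X Y) > 0 \<Longrightarrow>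
    form G n (Nv G n X Y) X = sqrt (form G n (Rv G n X Y) (Rv G n X Y))"
proof -
  assume Y: "form G n Y Y \<noteq> 0" and R: "form G n (Rv G n X Y) (Rv G n X Y) > 0"
  have "form G n (Nv G n X Y) X = form G n (Rv G n X Y) (Rv G n X Y) / sqrt (form G n (Rv G n X Y) (Rv G n X Y))"
    unfolding Nv_def using Rv_X[OF Y] Rv_R[OF Y] by (simp add: form_lin)
  also have "\<dots> = sqrt (form G n (Rv G n X Y) (Rv G n X Y))" using R by (simp add: real_div_sqrt)
  finally show ?thesis .
qed

lemma Nv_Nv:
  assumes X: "form G n X X > 0" and Y: "form G n Y Y > 0"
    and D: "(form G n X Y)^2 < form G n X X * form G n Y Y"
  shows "form G n (Nv G n X Y) (Nv G n Y X) = - form G n X Y / sqrt (form G n X X * form G n Y Y)"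
proof -
  let ?xx = "form G n X X" and ?yy = "form G n Y Y" and ?xy = "form G n X Y"
  have yx: "form G n Y X = ?xy" by (rule form_sym)
  have R1: "form G n (Rv G n X Y) (Rv G n X Y) = (?xx * ?yy - ?xy^2) / ?yy"
    using Rv_R[of G n Y X] Y by (simp add: field_simps)
  have R2: "form G n (Rv G n Y X) (Rv G n Y X) = (?xx * ?yy - ?xy^2) / ?xx"
    using Rv_R[of G n X Y] X yx by (simp add: field_simps)
  have RR: "form G n (Rv G n X Y) (Rv G n Y X) = - ?xy * (?xx * ?yy - ?xy^2) / (?xx * ?yy)"
    unfolding Rv_def using X Y yx by (simp add: form_lin field_simps power2_eq_square)
  define D' where "D' = ?xx * ?yy - ?xy^2"
  have D'p: "D' > 0" using D D'_def by simp
  have s: "sqrt (D' / ?yy) * sqrt (D' / ?xx) = D' / sqrt (?xx * ?yy)"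
  proof -
    have "sqrt (D' / ?yy) * sqrt (D' / ?xx) = sqrt (D' * D' / (?xx * ?yy))"
      by (simp add: real_sqrt_mult[symmetric] field_simps)
    also have "\<dots> = D' / sqrt (?xx * ?yy)" using D'p X Y by (simp add: real_sqrt_divide)
    finally show ?thesis .
  qed
  have "form G n (Nv G n X Y) (Nv G n Y X) = form G n (Rv G n X Y) (Rv G n Y X) /
      (sqrt (form G n (Rv G n X Y) (Rv G n X Y)) * sqrt (form G n (Rv G n Y X) (Rv G n Y X)))"
    unfolding Nv_def by (simp add: form_lin)
  also have "\<dots> = (- ?xy * D' / (?xx * ?yy)) / (D' / sqrt (?xx * ?yy))"
    using R1 R2 RR s D'_def by simp
  also have "\<dots> = - ?xy / sqrt (?xx * ?yy)"
    using D'p X Y by (simp add: field_simps real_sqrt_mult)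
  finally show ?thesis .
qed

context CP begin

lemma oth_lt: "oth i < n" using n3 unfolding oth_def by auto
lemma oth_ne: "oth i \<noteq> i" unfolding oth_def by auto

lemma inTan_iff: assumes v: "smp v" shows "inTan G n v w \<longleftrightarrow> spn {..<n} (\<lambda>s. sv (v s)) w"
proof (cases "G = Euc")
  case True
  have vk: "v k = a k" using smp_k[OF v] .
  have lc: "\<And>c. lincomb {..<n} c (\<lambda>s. sv (v s)) = vsub (lincomb {..<n} c v) (vsc (\<Sum>s<n. c s) (a k))"
    using True unfolding lincomb_def vsub_def vsc_def sh_def zz_def
    by (simp add: fun_eq_iff sum_subtractf sum_distrib_right right_diff_distrib)
  show ?thesis
  proof
    assume "inTan G n v w"
    then obtain c where c: "w = lincomb {..<n} c v" "(\<Sum>s<n. c s) = 0" unfolding inTan_def using True by blast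
    then have "w = lincomb {..<n} c (\<lambda>s. sv (v s))" using lc[of c] by (simp add: vsc_def)
    then show "spn {..<n} (\<lambda>s. sv (v s)) w" unfolding spn_def by blast
  next
    assume "spn {..<n} (\<lambda>s. sv (v s)) w"
    then obtain c where c: "w = lincomb {..<n} c (\<lambda>s. sv (v s))" unfolding spn_def by blast
    define c' where "c' = (\<lambda>s. c s + (if s = k then - (\<Sum>t<n. c t) else 0))"
    have "lincomb {..<n} c' v = vsub (lincomb {..<n} c v) (vsc (\<Sum>s<n. c s) (a k))"
      unfolding lincomb_def vsub_def vsc_def c'_def using on vk
      by (simp add: fun_eq_iff distrib_right sum.distrib if_distrib[of "\<lambda>x. x * _"] cong: if_cong)
    moreover have "(\<Sum>s<n. c' s) = 0" unfolding c'_def using on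
      by (simp add: sum.distrib)
    ultimately show "inTan G n v w" unfolding inTan_def using c lc[of c] by metis
  qed
next
  case False then show ?thesis unfolding inTan_def spn_def by (simp add: sv_nE)
qed

lemma rel_form: "B w (rel G x y) = B w (sv x) - (if G = Euc then B w (sv y) else 0)"
  unfolding rel_def sh_def zz_def by (auto simp: form_lin)

definition Qn :: "(nat \<Rightarrow> nat \<Rightarrow> real) \<Rightarrow> nat \<Rightarrow> (nat \<Rightarrow> real) \<Rightarrow> bool" where
  "Qn v i w \<longleftrightarrow> spn {..<n} (\<lambda>s. sv (v s)) w \<and> B w w = 1 \<and> (\<forall>s<n. s \<noteq> i \<longrightarrow> B w (sv (v s)) = 0) \<and> B w (sv (v i)) > 0"

lemma nrm_char: assumes v: "smp v" and i: "i \<in> {p,q}"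
  shows "(inTan G n v w \<and> B w w = 1 \<and> (\<forall>s<n. s \<noteq> i \<longrightarrow> B w (rel G (v s) (v (oth i))) = 0) \<and>
          B w (rel G (v i) (v (oth i))) > 0) \<longleftrightarrow> Qn v i w"
proof (cases "G = Euc")
  case False
  have r: "\<And>x y. B w (rel G x y) = B w (sv x)" using False rel_form by simp
  show ?thesis unfolding Qn_def inTan_iff[OF v] r ..
next
  case True
  have ki: "k \<noteq> i" "k < n" using i op oq on by auto
  have r: "\<And>x y. B w (rel G x y) = B w (sv x) - B w (sv y)" using True rel_form by simp
  have vk: "sv (v k) = (\<lambda>_. 0)" using sv_ak[OF True] smp_k[OF v] by simp
  have ot: "oth i < n" "oth i \<noteq> i" using oth_lt oth_ne by auto
  show ?thesis unfolding Qn_def inTan_iff[OF v] r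
  proof
    assume h: "spn {..<n} (\<lambda>s. sv (v s)) w \<and> B w w = 1 \<and>
      (\<forall>s<n. s \<noteq> i \<longrightarrow> B w (sv (v s)) - B w (sv (v (oth i))) = 0) \<and> 0 < B w (sv (v i)) - B w (sv (v (oth i)))"
    then have "B w (sv (v k)) - B w (sv (v (oth i))) = 0" using ki by blast
    then have z: "B w (sv (v (oth i))) = 0" using vk by simp
    show "spn {..<n} (\<lambda>s. sv (v s)) w \<and> B w w = 1 \<and> (\<forall>s<n. s \<noteq> i \<longrightarrow> B w (sv (v s)) = 0) \<and> 0 < B w (sv (v i))"
      using h z by simp
  next
    assume h: "spn {..<n} (\<lambda>s. sv (v s)) w \<and> B w w = 1 \<and> (\<forall>s<n. s \<noteq> i \<longrightarrow> B w (sv (v s)) = 0) \<and> 0 < B w (sv (v i))"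
    then have z: "B w (sv (v (oth i))) = 0" using ot by blast
    show "spn {..<n} (\<lambda>s. sv (v s)) w \<and> B w w = 1 \<and>
      (\<forall>s<n. s \<noteq> i \<longrightarrow> B w (sv (v s)) - B w (sv (v (oth i))) = 0) \<and> 0 < B w (sv (v i)) - B w (sv (v (oth i)))"
      using h z by simp
  qed
qed

lemma Qn_uniq: assumes v: "smp v" and i: "i \<in> {p,q}" and w1: "Qn v i w1" and w2: "Qn v i w2"
  shows "w1 = w2"
proof -
  let ?l = "B w2 (sv (v i)) / B w1 (sv (v i))"
  have p1: "B w1 (sv (v i)) > 0" and p2: "B w2 (sv (v i)) > 0" using w1 w2 Qn_def by auto
  define z where "z = vsub w2 (vsc ?l w1)"
  have zs: "spn {..<n} (\<lambda>s. sv (v s)) z" unfolding z_def using w1 w2 Qn_def by (auto intro: spn_sub spn_sc)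
  have "\<And>s. s < n \<Longrightarrow> B z (sv (v s)) = 0"
  proof -
    fix s assume s: "s < n"
    show "B z (sv (v s)) = 0"
    proof (cases "s = i")
      case True then show ?thesis unfolding z_def using p1 by (simp add: form_lin)
    next
      case False then show ?thesis unfolding z_def using w1 w2 s Qn_def by (simp add: form_lin)
    qed
  qed
  then have "z = (\<lambda>_. 0)" using CORE[OF v zs] by blast
  then have eq: "w2 = vsc ?l w1" unfolding z_def vsub_def vsc_def by (auto simp: fun_eq_iff)
  have "1 = ?l^2" using w1 w2 unfolding Qn_def by (subst (asm) (2) eq, subst (asm) (3) eq) (simp add: form_lin power2_eq_square)
  moreover have "?l > 0" using p1 p2 by simp
  ultimately have "?l = 1" by (metis abs_of_pos real_sqrt_abs real_sqrt_one)
  then show ?thesis using eq unfolding vsc_def by simp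
qed

lemma nrm_eq_Qn: assumes v: "smp v" and i: "i \<in> {p,q}" and w: "Qn v i w" shows "nrm G n v i = w"
  unfolding nrm_def
  by (rule the_equality) (use nrm_char[OF v i] w Qn_uniq[OF v i] in auto)

end

context CP begin

lemma iv_Pv: "smp v \<Longrightarrow> s < n \<Longrightarrow> inV N (P (sv (v s)))" using iv_P smp_iv by blast

lemma Wperp_Nv: "Wperp X \<Longrightarrow> Wperp Y \<Longrightarrow> Wperp (Nv G n X Y)"
  unfolding Nv_def Rv_def by (intro Wperp_lin)

lemma Wperp_Rv: "Wperp X \<Longrightarrow> Wperp Y \<Longrightarrow> Wperp (Rv G n X Y)"
  unfolding Rv_def by (intro Wperp_lin)

lemma ij_facts: "i \<in> {p,q} \<Longrightarrow> i < n \<and> i \<in> Jn G n k \<and> i \<noteq> k"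
  using pn qn op oq unfolding Jn_def by auto

lemma Ppos: assumes v: "smp v" and j: "j \<in> {p,q}" shows "B (P (sv (v j))) (P (sv (v j))) > 0"
proof -
  have jj: "j < n" using ij_facts[OF j] by simp
  have "P (sv (v j)) \<noteq> (\<lambda>_. 0)"
  proof
    assume "P (sv (v j)) = (\<lambda>_. 0)"
    then have "sv (v j) = Pr (sv (v j))" unfolding vsub_def by (auto simp: fun_eq_iff)
    moreover have "spn (Jn G n k - {j}) (\<lambda>s. sv (v s)) (Pr (sv (v j)))"
      by (rule spn_Pr_v[OF v]) (use finJn JW_sub_Jn[OF j] in auto)
    ultimately show False using notspn[OF v j] by simp
  qed
  then show ?thesis using orthW_pos[OF iv_Pv[OF v jj] Wperp_P] by simp
qed

lemma Rpos: assumes v: "smp v" and i: "i \<in> {p,q}" and j: "j \<in> {p,q}" and ij: "i \<noteq> j"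
  shows "B (Rv G n (P (sv (v i))) (P (sv (v j)))) (Rv G n (P (sv (v i))) (P (sv (v j)))) > 0"
proof -
  let ?X = "P (sv (v i))" and ?Y = "P (sv (v j))"
  let ?R = "Rv G n ?X ?Y"
  have ii: "i < n" and jj: "j < n" using ij_facts i j by auto
  have "?R \<noteq> (\<lambda>_. 0)"
  proof
    assume R0: "?R = (\<lambda>_. 0)"
    let ?kk = "B ?X ?Y / B ?Y ?Y"
    have pt: "\<And>x. ?X x - ?kk * ?Y x = 0" using R0 unfolding Rv_def vsub_def vsc_def by (metis (mono_tags, lifting))
    have eq: "sv (v i) = vadd (Pr (sv (v i))) (vsc ?kk (vsub (sv (v j)) (Pr (sv (v j)))))"
    proof
      fix x show "sv (v i) x = vadd (Pr (sv (v i))) (vsc ?kk (vsub (sv (v j)) (Pr (sv (v j))))) x"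
        using pt[of x] unfolding vsub_def vadd_def vsc_def by argo
    qed
    have fin: "finite (Jn G n k - {i})" using finJn by simp
    have s1: "spn (Jn G n k - {i}) (\<lambda>s. sv (v s)) (Pr x)" for x
      by (rule spn_Pr_v[OF v fin]) (use JW_sub_Jn[OF i] in auto)
    have s2: "spn (Jn G n k - {i}) (\<lambda>s. sv (v s)) (sv (v j))"
      by (rule spn_gen[OF fin]) (use ij_facts[OF j] ij in auto)
    have "spn (Jn G n k - {i}) (\<lambda>s. sv (v s)) (sv (v i))"
      by (subst eq) (intro spn_add spn_sc spn_sub s1 s2)
    then show False using notspn[OF v i] by simp
  qed
  moreover have "inV N ?R" unfolding Rv_def by (intro inV_vsub inV_vsc iv_Pv[OF v ii] iv_Pv[OF v jj])
  moreover have "Wperp ?R" by (intro Wperp_Rv Wperp_P)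
  ultimately show ?thesis using orthW_pos by blast
qed

lemma CSstrict: assumes v: "smp v" and i: "i \<in> {p,q}" and j: "j \<in> {p,q}" and ij: "i \<noteq> j"
  shows "(B (P (sv (v i))) (P (sv (v j))))^2 < B (P (sv (v i))) (P (sv (v i))) * B (P (sv (v j))) (P (sv (v j)))"
proof -
  have Y: "B (P (sv (v j))) (P (sv (v j))) > 0" by (rule Ppos[OF v j])
  have "0 < B (P (sv (v i))) (P (sv (v i))) - (B (P (sv (v i))) (P (sv (v j))))^2 / B (P (sv (v j))) (P (sv (v j)))"
    using Rpos[OF v i j ij] Rv_R[of G n "P (sv (v j))" "P (sv (v i))"] Y by simp
  then show ?thesis using Y by (simp add: field_simps)
qed

lemma Qn_Nv: assumes v: "smp v" and i: "i \<in> {p,q}" and j: "j \<in> {p,q}" and ij: "i \<noteq> j"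
  shows "Qn v i (Nv G n (P (sv (v i))) (P (sv (v j))))"
proof -
  let ?X = "P (sv (v i))" and ?Y = "P (sv (v j))"
  let ?N = "Nv G n ?X ?Y"
  have Y: "B ?Y ?Y > 0" by (rule Ppos[OF v j])
  have R: "B (Rv G n ?X ?Y) (Rv G n ?X ?Y) > 0" by (rule Rpos[OF v i j ij])
  have W: "Wperp ?N" by (intro Wperp_Nv Wperp_P)
  have ii: "i < n" and jj: "j < n" using ij_facts i j by auto
  have spPr: "spn {..<n} (\<lambda>s. sv (v s)) (Pr x)" for x by (rule spn_Pr_v[OF v]) (use JW_sub in auto)
  have sp: "spn {..<n} (\<lambda>s. sv (v s)) ?N" unfolding Nv_def Rv_def
    by (intro spn_sc spn_sub spPr spn_gen) (use ii jj in auto)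
  have N1: "B ?N ?N = 1" by (rule Nv_N[OF R])
  have orth: "B ?N (sv (v s)) = 0" if s: "s < n" "s \<noteq> i" for s
  proof (cases "s = j")
    case True
    have "B ?N ?Y = B ?N (sv (v j)) - B ?N (Pr (sv (v j)))" by (simp add: form_lin)
    then show ?thesis using Nv_Y[of G n ?Y ?X] Y Wperp_Pr[OF W] True by simp
  next
    case False
    then have "s \<notin> {p,q}" using s i j ij by auto
    then show ?thesis using W s smp_off[OF v s(1)] unfolding Wperp_def by simp
  qed
  have "B ?N ?X = B ?N (sv (v i)) - B ?N (Pr (sv (v i)))" by (simp add: form_lin)
  then have "B ?N (sv (v i)) = sqrt (B (Rv G n ?X ?Y) (Rv G n ?X ?Y))"
    using Nv_X[of G n ?Y ?X] Y R Wperp_Pr[OF W] by simp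
  then have pos: "B ?N (sv (v i)) > 0" using R by simp
  show ?thesis unfolding Qn_def using sp N1 orth pos by blast
qed

lemma nrm_Nv: assumes v: "smp v" and i: "i \<in> {p,q}" and j: "j \<in> {p,q}" and ij: "i \<noteq> j"
  shows "nrm G n v i = Nv G n (P (sv (v i))) (P (sv (v j)))"
  by (rule nrm_eq_Qn[OF v i Qn_Nv[OF v i j ij]])

lemma dih_v: assumes v: "smp v" and i: "i \<in> {p,q}" and j: "j \<in> {p,q}" and ij: "i \<noteq> j"
  shows "dih G n v i j = arccos (B (P (sv (v i))) (P (sv (v j))) /
           sqrt (B (P (sv (v i))) (P (sv (v i))) * B (P (sv (v j))) (P (sv (v j)))))"
proof -
  have "B (nrm G n v i) (nrm G n v j) = - B (P (sv (v i))) (P (sv (v j))) /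
           sqrt (B (P (sv (v i))) (P (sv (v i))) * B (P (sv (v j))) (P (sv (v j))))"
    unfolding nrm_Nv[OF v i j ij] nrm_Nv[OF v j i ij[symmetric]]
    by (rule Nv_Nv[OF Ppos[OF v i] Ppos[OF v j] CSstrict[OF v i j ij]])
  then show ?thesis unfolding dih_def by simp
qed

end

lemma form_S_nH: "G \<noteq> Hyp \<Longrightarrow> form G n x y = S (amb G n) x y"
  unfolding form_def S_def Let_def by simp

lemma form_CS_nH: "G \<noteq> Hyp \<Longrightarrow> form G n x y \<le> sqrt (form G n x x) * sqrt (form G n y y)"
  using S_CS by (simp add: form_S_nH)

lemma form_CS_abs: "G \<noteq> Hyp \<Longrightarrow> \<bar>form G n x y\<bar> \<le> sqrt (form G n x x) * sqrt (form G n y y)"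
proof -
  assume G: "G \<noteq> Hyp"
  have "form G n (vsc (-1) x) y \<le> sqrt (form G n (vsc (-1) x) (vsc (-1) x)) * sqrt (form G n y y)"
    by (rule form_CS_nH[OF G])
  then have "- form G n x y \<le> sqrt (form G n x x) * sqrt (form G n y y)" by (simp add: form_lin)
  then show ?thesis using form_CS_nH[OF G, of n x y] by linarith
qed

lemma arcosh_inj: "(1::real) \<le> x \<Longrightarrow> 1 \<le> y \<Longrightarrow> arcosh x = arcosh y \<Longrightarrow> x = y"
  by (metis cosh_arcosh_real)

lemma arcosh_mono: "(1::real) \<le> x \<Longrightarrow> x \<le> y \<Longrightarrow> arcosh x \<le> arcosh y"
  using arcosh_less_iff_real[of y x] by (metis linorder_not_le order_trans)

context CP begin

lemma sv_id_Sph: "G = Sph \<Longrightarrow> sv z = z" by (rule sv_nE) simp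
lemma sv_id_Hyp: "G = Hyp \<Longrightarrow> sv z = z" by (rule sv_nE) simp

lemma sv_vadd: "sv (vadd (zz G a k) w) = w" unfolding sh_def vadd_def vsub_def by simp
lemma sv_inv: "vadd (zz G a k) (sv y) = y" unfolding sh_def vadd_def vsub_def by simp

lemma AFF: assumes I: "I \<subseteq> {..<n}" "G = Euc \<Longrightarrow> k \<in> I" and w: "spn I (\<lambda>s. sv (a s)) w"
  shows "\<exists>c. vadd (zz G a k) w = lincomb I c a \<and> (G = Euc \<longrightarrow> (\<Sum>s\<in>I. c s) = 1)"
proof -
  obtain c where c: "w = lincomb I c (\<lambda>s. sv (a s))" using w spn_def by blast
  have fin: "finite I" using I finite_subset by blast
  show ?thesis
  proof (cases "G = Euc")
    case True
    define c' where "c' = (\<lambda>s. c s + (if s = k then 1 - (\<Sum>t\<in>I. c t) else 0))"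
    have "vadd (zz G a k) w = lincomb I c' a"
      unfolding c c'_def lincomb_def vadd_def using True I fin
      by (simp add: fun_eq_iff sh_def zz_def vsub_def distrib_right sum.distrib if_distrib[of "\<lambda>x. x * _"]
          right_diff_distrib sum_subtractf sum_distrib_right cong: if_cong)
         (simp add: sum_distrib_right[symmetric] left_diff_distrib)
    moreover have "(\<Sum>s\<in>I. c' s) = 1" unfolding c'_def using I fin True by (simp add: sum.distrib)
    ultimately show ?thesis by blast
  next
    case False
    then show ?thesis using c by (auto simp: zz_def sh_def vadd_def vsub_def lincomb_def)
  qed
qed

lemma AFF': assumes I: "finite I" and y: "y = lincomb I c a" and s: "G = Euc \<Longrightarrow> (\<Sum>s\<in>I. c s) = 1"
  shows "spn I (\<lambda>s. sv (a s)) (sv y)"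
proof (cases "G = Euc")
  case True
  have "sv y = lincomb I c (\<lambda>s. sv (a s))"
    unfolding y lincomb_def using True s[OF True]
    by (simp add: fun_eq_iff sh_def zz_def vsub_def right_diff_distrib sum_subtractf sum_distrib_right[symmetric])
  then show ?thesis unfolding spn_def by blast
next
  case False then show ?thesis using y by (auto simp: spn_def sv_nE)
qed

lemma planeI_spn: "y \<in> planeI G n a I \<Longrightarrow> finite I \<Longrightarrow> isPt G n y \<and> spn I (\<lambda>s. sv (a s)) (sv y)"
  unfolding planeI_def using AFF' by blast

lemma planeI_intro: "I \<subseteq> {..<n} \<Longrightarrow> (G = Euc \<Longrightarrow> k \<in> I) \<Longrightarrow> spn I (\<lambda>s. sv (a s)) w \<Longrightarrow> isPt G n (vadd (zz G a k) w)
  \<Longrightarrow> vadd (zz G a k) w \<in> planeI G n a I"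
  unfolding planeI_def using AFF by blast

lemma vsub_sv: "vsub x y = vsub (sv x) (sv y)" unfolding sh_def vsub_def by (simp add: fun_eq_iff)

lemma gd_Euc: "G = Euc \<Longrightarrow> gdist G n x y = sqrt (B (sv x) (sv x) - 2 * B (sv x) (sv y) + B (sv y) (sv y))"
proof -
  assume E: "G = Euc"
  have "B (vsub (sv x) (sv y)) (vsub (sv x) (sv y)) = B (sv x) (sv x) - 2 * B (sv x) (sv y) + B (sv y) (sv y)"
    by (simp add: form_lin form_sym[of G n "sv y" "sv x"])
  then show ?thesis unfolding gdist_def vsub_sv[of x y] using E by simp
qed

lemma gd_eq:
  assumes xx: "B (sv x) (sv x) = B (sv y) (sv y)" and xr: "B (sv x) (sv r) = B (sv y) (sv r)"
  shows "gdist G n x r = gdist G n y r"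
proof (cases G)
  case Euc then show ?thesis using gd_Euc xx xr by simp
next
  case Sph
  have "B x r = B y r" using xr by (simp only: sv_id_Sph[OF Sph])
  then show ?thesis by (simp add: gdist_def Sph)
next
  case Hyp
  have "B x r = B y r" using xr by (simp only: sv_id_Hyp[OF Hyp])
  then show ?thesis by (simp add: gdist_def Hyp)
qed

lemma unit_abs: "G = Sph \<Longrightarrow> B x x = 1 \<Longrightarrow> B y y = 1 \<Longrightarrow> \<bar>B x y\<bar> \<le> 1"
  using form_CS_abs[of G n x y] by simp

lemma gd_inv:
  assumes x: "isPt G n x" and y: "isPt G n y" and r: "isPt G n r"
    and E: "G = Euc \<Longrightarrow> B (sv x) (sv x) = B (sv y) (sv y)"
    and g: "gdist G n x r = gdist G n y r"
  shows "B (sv x) (sv r) = B (sv y) (sv r)"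
proof (cases G)
  case Euc
  have "sqrt (B (sv x) (sv x) - 2 * B (sv x) (sv r) + B (sv r) (sv r)) =
        sqrt (B (sv y) (sv y) - 2 * B (sv y) (sv r) + B (sv r) (sv r))"
    using g gd_Euc[OF Euc, of x r] gd_Euc[OF Euc, of y r] by simp
  then have "B (sv x) (sv x) - 2 * B (sv x) (sv r) = B (sv y) (sv y) - 2 * B (sv y) (sv r)"
    by simp
  then show ?thesis using E[OF Euc] by simp
next
  case Sph
  have u: "B x x = 1" "B y y = 1" "B r r = 1" using x y r Sph by (auto simp: isPt_def)
  have "arccos (B x r) = arccos (B y r)" using g Sph by (simp add: gdist_def)
  moreover have "\<bar>B x r\<bar> \<le> 1 \<and> \<bar>B y r\<bar> \<le> 1" using unit_abs[OF Sph] u by blast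
  ultimately have "B x r = B y r" using arccos_eq_iff by blast
  then show ?thesis by (simp only: sv_id_Sph[OF Sph])
next
  case Hyp
  have xH: "isPt Hyp n x" and yH: "isPt Hyp n y" and rH: "isPt Hyp n r" using x y r Hyp by simp_all
  have "form Hyp n x r \<le> -1" "form Hyp n y r \<le> -1" using fut_le[OF xH rH] fut_le[OF yH rH] by simp_all
  then have h1: "1 \<le> - B x r" "1 \<le> - B y r" using Hyp by simp_all
  have "arcosh (- B x r) = arcosh (- B y r)" using g Hyp by (simp add: gdist_def)
  then have "- B x r = - B y r" using arcosh_inj[OF h1] by blast
  then have "B x r = B y r" by simp
  then show ?thesis by (simp only: sv_id_Hyp[OF Hyp])
qed

lemma ONEDIM: assumes v: "smp v" and i: "i \<in> {p,q}" and w: "Qn v i w"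
  and z: "spn {..<n} (\<lambda>s. sv (v s)) z" and orth: "\<And>s. s < n \<Longrightarrow> s \<noteq> i \<Longrightarrow> B z (sv (v s)) = 0"
  shows "z = vsc (B z (sv (v i)) / B w (sv (v i))) w"
proof -
  let ?m = "B z (sv (v i)) / B w (sv (v i))"
  have wp: "B w (sv (v i)) > 0" using w Qn_def by blast
  define d where "d = vsub z (vsc ?m w)"
  have "d = (\<lambda>_. 0)"
  proof (rule CORE[OF v])
    show "spn {..<n} (\<lambda>s. sv (v s)) d" unfolding d_def using z w Qn_def by (blast intro: spn_sub spn_sc)
    fix s assume s: "s < n"
    show "B d (sv (v s)) = 0"
    proof (cases "s = i")
      case True then show ?thesis unfolding d_def using wp by (simp add: form_lin)
    next
      case False then show ?thesis unfolding d_def using orth[OF s False] w s Qn_def by (simp add: form_lin)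
    qed
  qed
  then show ?thesis unfolding d_def vsub_def vsc_def by (auto simp: fun_eq_iff)
qed

end

context CP begin

definition "Ap = P (sv (a p))"
definition "Aq = P (sv (a q))"
definition "Bp = P (sv (b p))"
definition "cc = B Bp Aq / B Aq Aq"
definition "rp = Rv G n Bp Aq"
definition "bet = sqrt (B rp rp)"
definition "np = Nv G n Ap Aq"
definition "Mp = vadd (Pr (sv (b p))) (vsc cc Aq)"
definition "wp = vadd Mp (vsc bet np)"
definition "y0 = vadd (zz G a k) wp"

lemma pq_in: "p \<in> {p,q}" "q \<in> {p,q}" by auto

lemma Pp_p: "facetP a b p p = b p" and Pp_q: "facetP a b p q = a q"
  unfolding facetP_def using pq by auto

lemma Aq_pos: "B Aq Aq > 0" unfolding Aq_def using Ppos[OF smp_a pq_in(2)] .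
lemma Ap_pos: "B Ap Ap > 0" unfolding Ap_def using Ppos[OF smp_a pq_in(1)] .
lemma rp_pos: "B rp rp > 0"
  using Rpos[OF smp_Pp pq_in(1) pq_in(2) pq] unfolding rp_def Bp_def Aq_def Pp_p Pp_q .
lemma bet_pos: "bet > 0" unfolding bet_def using rp_pos by simp
lemma bet_sq: "bet^2 = B rp rp" unfolding bet_def using rp_pos by simp
lemma np_nrm: "nrm G n a p = np"
  unfolding np_def Ap_def Aq_def by (rule nrm_Nv[OF smp_a pq_in(1) pq_in(2) pq])
lemma Qn_np: "Qn a p np" unfolding np_def Ap_def Aq_def by (rule Qn_Nv[OF smp_a pq_in(1) pq_in(2) pq])
lemma np_unit: "B np np = 1" using Qn_np Qn_def by blast
lemma np_Aq: "B np Aq = 0" unfolding np_def using Nv_Y Aq_pos by simp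
lemma rp_Aq: "B rp Aq = 0" unfolding rp_def using Rv_Y Aq_pos by simp
lemma W_Aq: "Wperp Aq" unfolding Aq_def by (rule Wperp_P)
lemma W_Ap: "Wperp Ap" unfolding Ap_def by (rule Wperp_P)
lemma W_Bp: "Wperp Bp" unfolding Bp_def by (rule Wperp_P)
lemma W_np: "Wperp np" unfolding np_def by (intro Wperp_Nv W_Ap W_Aq)
lemma W_rp: "Wperp rp" unfolding rp_def by (intro Wperp_Rv W_Bp W_Aq)

lemma Wq: "Wperp z \<Longrightarrow> B z (sv (a q)) = B z Aq"
proof -
  assume W: "Wperp z"
  have "B z Aq = B z (sv (a q)) - B z (Pr (sv (a q)))" unfolding Aq_def by (simp add: form_lin)
  then show ?thesis using Wperp_Pr[OF W] by simp
qed

lemma orthFp: assumes s: "s < n" "s \<noteq> p"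
  shows "B rp (sv (a s)) = 0" and "B np (sv (a s)) = 0"
proof -
  have "B rp (sv (a s)) = 0 \<and> B np (sv (a s)) = 0"
  proof (cases "s = q")
    case True then show ?thesis using Wq[OF W_rp] Wq[OF W_np] rp_Aq np_Aq by simp
  next
    case False then show ?thesis using W_rp W_np s unfolding Wperp_def by auto
  qed
  then show "B rp (sv (a s)) = 0" and "B np (sv (a s)) = 0" by auto
qed

lemma F1: "sv (b p) = vadd Mp rp"
  unfolding Mp_def rp_def Rv_def Bp_def cc_def vadd_def vsub_def vsc_def by (simp add: fun_eq_iff)

lemma Mp_rp: "B Mp rp = 0"
  unfolding Mp_def using Wperp_Pr[OF W_rp] rp_Aq by (simp add: form_lin form_sym[of G n _ rp])
lemma Mp_np: "B Mp np = 0"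
  unfolding Mp_def using Wperp_Pr[OF W_np] np_Aq by (simp add: form_lin form_sym[of G n _ np])

lemma F6: "B wp wp = B (sv (b p)) (sv (b p))"
proof -
  have "B wp wp = B Mp Mp + bet^2"
    unfolding wp_def using Mp_np np_unit by (simp add: form_lin form_sym[of G n np Mp] power2_eq_square)
  moreover have "B (sv (b p)) (sv (b p)) = B Mp Mp + B rp rp"
    unfolding F1 using Mp_rp by (simp add: form_lin form_sym[of G n rp Mp])
  ultimately show ?thesis using bet_sq by simp
qed

lemma F7: "s < n \<Longrightarrow> s \<noteq> p \<Longrightarrow> B wp (sv (a s)) = B (sv (b p)) (sv (a s))"
  unfolding wp_def F1 using orthFp by (simp add: form_lin)

lemma F8: "B np wp = bet"
  unfolding wp_def using Mp_np np_unit by (simp add: form_lin form_sym[of G n np Mp])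

lemma spPr_a: "JW G n p q k \<subseteq> I \<Longrightarrow> finite I \<Longrightarrow> spn I (\<lambda>s. sv (a s)) (Pr x)"
  using spn_Pr_v[OF smp_a] by blast

lemma F10: "spn ({..<n} - {p}) (\<lambda>s. sv (a s)) Mp"
proof -
  have JW: "JW G n p q k \<subseteq> {..<n} - {p}" unfolding JW_def by auto
  show ?thesis unfolding Mp_def Aq_def
    by (intro spn_add spn_sc spn_sub spPr_a[OF JW] spn_gen) (use qn pq in auto)
qed

lemma F9: "spn {..<n} (\<lambda>s. sv (a s)) wp"
proof -
  have "spn {..<n} (\<lambda>s. sv (a s)) Mp" by (rule spn_mono[OF _ _ F10]) auto
  moreover have "spn {..<n} (\<lambda>s. sv (a s)) np" using Qn_np Qn_def by blast
  ultimately show ?thesis unfolding wp_def by (intro spn_add spn_sc)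
qed

lemma sv_y0: "sv y0 = wp" unfolding y0_def by (rule sv_vadd)

lemma iv_a_sv: "s < n \<Longrightarrow> inV N (sv (a s))" using smp_iv[OF smp_a] .

lemma iv_wp: "inV N wp"
  by (rule inV_spn[OF _ F9]) (use iv_a_sv in auto)
lemma iv_y0: "inV N y0" unfolding y0_def by (intro inV_vadd iv_zz iv_wp)

lemma y0_nE: "G \<noteq> Euc \<Longrightarrow> y0 = wp" using sv_y0 sv_nE by metis

lemma y0_pt: "isPt G n y0"
proof (cases G)
  case Euc then show ?thesis using iv_y0 by (simp add: isPt_def)
next
  case Sph
  have "B y0 y0 = B (b p) (b p)" using F6 y0_nE[of] Sph sv_id_Sph[OF Sph] by simp
  also have "\<dots> = 1" using ptB[OF pn] Sph by (simp add: isPt_def)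
  finally show ?thesis using iv_y0 Sph by (simp add: isPt_def)
next
  case Hyp
  have yy: "B y0 y0 = B (b p) (b p)" using F6 y0_nE[of] Hyp sv_id_Hyp[OF Hyp] by simp
  also have "\<dots> = -1" using ptB[OF pn] Hyp by (simp add: isPt_def)
  finally have y1: "B y0 y0 = -1" .
  let ?r = "oth p"
  have r: "?r < n" "?r \<noteq> p" using oth_lt oth_ne by auto
  have "B y0 (a ?r) = B (b p) (a ?r)" using F7[OF r] y0_nE Hyp sv_id_Hyp[OF Hyp] by simp
  moreover have "form Hyp n (b p) (a ?r) \<le> -1" using fut_le ptB[OF pn] ptA[OF r(1)] Hyp by simp
  ultimately have neg: "form Hyp n y0 (a ?r) < 0" using Hyp by simp
  have "y0 n > 0" by (rule fut_dir[OF _ _ neg]) (use y1 Hyp ptA[OF r(1)] in simp_all)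
  then show ?thesis using iv_y0 y1 Hyp by (simp add: isPt_def)
qed

lemma sign_rel: "B np (rel G y (a (oth p))) = B np (sv y)"
proof -
  have z: "B np (sv (a (oth p))) = 0" using orthFp oth_lt oth_ne by blast
  show ?thesis unfolding rel_form z by simp
qed

lemma dist_y0: "r < n \<Longrightarrow> r \<noteq> p \<Longrightarrow> gdist G n y0 (a r) = gdist G n (b p) (a r)"
  by (rule gd_eq) (simp_all add: sv_y0 F6 F7)

lemma y0_in: "y0 \<in> planeI G n a {..<n}"
  unfolding y0_def by (rule planeI_intro[OF _ _ F9]) (use on y0_pt y0_def in auto)

lemma bzero_eq: "bzero G n a b p = y0"
  unfolding bzero_def
proof (rule the_equality)
  show "y0 \<in> planeI G n a {..<n} \<and> (\<forall>r<n. r \<noteq> p \<longrightarrow> gdist G n y0 (a r) = gdist G n (b p) (a r)) \<and>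
        0 < B (nrm G n a p) (rel G y0 (a (oth p)))"
    using y0_in dist_y0 sign_rel np_nrm sv_y0 F8 bet_pos by simp
next
  fix y assume h: "y \<in> planeI G n a {..<n} \<and> (\<forall>r<n. r \<noteq> p \<longrightarrow> gdist G n y (a r) = gdist G n (b p) (a r)) \<and>
        0 < B (nrm G n a p) (rel G y (a (oth p)))"
  have yp: "isPt G n y" and ys: "spn {..<n} (\<lambda>s. sv (a s)) (sv y)" using planeI_spn h by auto
  have nn: "B (sv y) (sv y) = B (sv (b p)) (sv (b p))"
  proof (cases G)
    case Euc
    have "gdist G n y (a k) = gdist G n (b p) (a k)" using h on op by blast
    then show ?thesis using gd_Euc[OF Euc] sv_ak[OF Euc] by simp
  next
    case Sph
    have "B y y = 1" "B (b p) (b p) = 1" using yp ptB[OF pn] Sph by (auto simp: isPt_def)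
    then show ?thesis by (simp only: sv_id_Sph[OF Sph])
  next
    case Hyp
    have "B y y = -1" "B (b p) (b p) = -1" using yp ptB[OF pn] Hyp by (auto simp: isPt_def)
    then show ?thesis by (simp only: sv_id_Hyp[OF Hyp])
  qed
  have orth: "B (sv y) (sv (a s)) = B (sv (b p)) (sv (a s))" if s: "s < n" "s \<noteq> p" for s
    by (rule gd_inv[OF yp ptB[OF pn] ptA[OF s(1)]]) (use nn h s in auto)
  define d where "d = vsub (sv y) wp"
  have ds: "spn {..<n} (\<lambda>s. sv (a s)) d" unfolding d_def using ys F9 by (rule spn_sub)
  have dorth: "B d (sv (a s)) = 0" if "s < n" "s \<noteq> p" for s
    unfolding d_def using orth[OF that] F7[OF that] by (simp add: form_lin)
  define m where "m = B d (sv (a p)) / B np (sv (a p))"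
  have dm: "d = vsc m np" unfolding m_def by (rule ONEDIM[OF smp_a pq_in(1) Qn_np ds dorth])
  have syv: "sv y = vadd wp (vsc m np)" using dm unfolding d_def vsub_def vadd_def vsc_def
    by (auto simp: fun_eq_iff) (metis add.commute diff_add_cancel)
  have "B (sv y) (sv y) = B wp wp + 2 * m * bet + m^2"
    unfolding syv using F8 np_unit by (simp add: form_lin form_sym[of G n wp np] power2_eq_square algebra_simps)
  then have q: "m * (m + 2 * bet) = 0" using nn F6 by (simp add: algebra_simps power2_eq_square)
  have "B np (sv y) > 0" using h np_nrm sign_rel by simp
  then have pos: "bet + m > 0" unfolding syv using F8 np_unit by (simp add: form_lin)
  have "m = 0 \<or> m + 2 * bet = 0" using q by simp
  then have "m = 0" using pos bet_pos by linarith
  then have "sv y = wp" using syv unfolding vadd_def vsc_def by simp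
  then show "y = y0" unfolding y0_def by (metis sv_inv)
qed

end

context CP begin

definition "Sp = planeI G n a ({..<n} - {p})"
definition "altv = (case G of Euc \<Rightarrow> bet | Sph \<Rightarrow> arccos (sqrt (1 - bet^2)) | Hyp \<Rightarrow> arcosh (sqrt (1 + bet^2)))"

lemma Sp_facts: "y \<in> Sp \<Longrightarrow> isPt G n y \<and> B rp (sv y) = 0 \<and> B (sv (b p)) (sv y) = B Mp (sv y)"
proof -
  assume y: "y \<in> Sp"
  then have yp: "isPt G n y" and ys: "spn ({..<n} - {p}) (\<lambda>s. sv (a s)) (sv y)"
    using planeI_spn[of y "{..<n} - {p}"] unfolding Sp_def by auto
  have r: "B rp (sv y) = 0" by (rule orth_spn[OF _ _ ys]) (use orthFp in auto)
  then show ?thesis using yp unfolding F1 by (simp add: form_lin form_sym[of G n rp])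
qed

lemma MM_eq: "B (sv (b p)) (sv (b p)) = B Mp Mp + bet^2"
  unfolding F1 using Mp_rp bet_sq by (simp add: form_lin form_sym[of G n rp Mp])

lemma iv_Mp: "inV N Mp" by (rule inV_spn[OF _ F10]) (use iv_a_sv in auto)

lemma nE_form: "G \<noteq> Euc \<Longrightarrow> B (sv x) (sv y) = B x y" using sv_nE by simp

lemma Mp_ak: "B Mp (sv (a (oth p))) = B (sv (b p)) (sv (a (oth p)))"
  unfolding F1 using orthFp(1)[OF oth_lt oth_ne] by (simp add: form_lin)

lemma vadd_zz_nE: "G \<noteq> Euc \<Longrightarrow> vadd (zz G a k) w = w" unfolding zz_def vadd_def by simp

lemma Ipt: "({..<n} - {p}) \<subseteq> {..<n}" "G = Euc \<Longrightarrow> k \<in> {..<n} - {p}" using on op by auto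

lemma alt_Euc: assumes Euc: "G = Euc" shows "(\<forall>y\<in>Sp. altv \<le> gdist G n (b p) y) \<and> (\<exists>y\<in>Sp. gdist G n (b p) y = altv)"
proof -
  have lb: "altv \<le> gdist G n (b p) y" if y: "y \<in> Sp" for y
  proof -
    have f: "B rp (sv y) = 0" using Sp_facts[OF y] by simp
    have e: "vsub (sv (b p)) (sv y) = vadd rp (vsub Mp (sv y))"
      unfolding F1 vadd_def vsub_def by (simp add: fun_eq_iff)
    have h1: "B rp (vsub Mp (sv y)) = 0" using f Mp_rp by (simp add: form_lin form_sym[of G n rp Mp])
    have "B (vsub (b p) y) (vsub (b p) y) = B rp rp + B (vsub Mp (sv y)) (vsub Mp (sv y))"
      unfolding vsub_sv[of "b p" y] e
      by (simp only: form_add_l form_add_r form_sym[of G n "vsub Mp (sv y)" rp] h1)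
    moreover have "B (vsub Mp (sv y)) (vsub Mp (sv y)) \<ge> 0" using form_nonneg_E Euc by simp
    ultimately have "B rp rp \<le> B (vsub (b p) y) (vsub (b p) y)" by simp
    then have "sqrt (B rp rp) \<le> sqrt (B (vsub (b p) y) (vsub (b p) y))" by simp
    then show ?thesis using Euc unfolding altv_def gdist_def bet_def by simp
  qed
  have ivv: "inV N (vadd (zz G a k) Mp)" by (intro inV_vadd iv_zz iv_Mp)
  have ptv: "isPt G n (vadd (zz G a k) Mp)" unfolding isPt_def using ivv Euc by simp
  have att: "vadd (zz G a k) Mp \<in> Sp"
    unfolding Sp_def by (rule planeI_intro[OF Ipt F10 ptv]) (use Euc in simp)
  have "vsub (sv (b p)) (sv (vadd (zz G a k) Mp)) = rp" unfolding sv_vadd F1 by (simp add: vadd_def vsub_def fun_eq_iff)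
  then have "gdist G n (b p) (vadd (zz G a k) Mp) = altv"
    using Euc unfolding altv_def gdist_def bet_def vsub_sv[of "b p"] by simp
  then show ?thesis using lb att by blast
qed

lemma alt_Sph: assumes Sph: "G = Sph" shows "(\<forall>y\<in>Sp. altv \<le> gdist G n (b p) y) \<and> (\<exists>y\<in>Sp. gdist G n (b p) y = altv)"
proof -
  have nE: "G \<noteq> Euc" "G \<noteq> Hyp" using Sph by auto
  have bb: "B (b p) (b p) = 1" using ptB[OF pn] Sph by (simp add: isPt_def)
  have MM: "B Mp Mp = 1 - bet^2" using MM_eq nE_form[OF nE(1)] bb by simp
  have M0: "B Mp Mp \<ge> 0" using form_nonneg_E[OF nE(2)] .
  have alt: "altv = arccos (sqrt (B Mp Mp))" unfolding altv_def MM using Sph by simp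
  have sM1: "sqrt (B Mp Mp) \<le> 1" using MM by simp
  have lb: "altv \<le> gdist G n (b p) y" if y: "y \<in> Sp" for y
  proof -
    have yp: "isPt G n y" and e: "B (b p) y = B Mp y"
      using Sp_facts[OF y] nE_form[OF nE(1)] sv_nE[OF nE(1)] by auto
    have yy: "B y y = 1" using yp Sph by (simp add: isPt_def)
    have "B Mp y \<le> sqrt (B Mp Mp)" using form_CS_nH[OF nE(2), of n Mp y] yy by simp
    moreover have "-1 \<le> B (b p) y" using unit_abs[OF Sph bb yy] by simp
    ultimately have "arccos (sqrt (B Mp Mp)) \<le> arccos (B (b p) y)"
      using e sM1 by (intro arccos_le_arccos) simp_all
    then show ?thesis unfolding alt gdist_def using Sph by simp
  qed
  have "\<exists>y\<in>Sp. gdist G n (b p) y = altv"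
  proof (cases "B Mp Mp = 0")
    case True
    then have M: "Mp = (\<lambda>_. 0)" using form_zero_E[OF nE(2) iv_Mp] by simp
    let ?y = "a (oth p)"
    have yin: "?y \<in> Sp" unfolding Sp_def
      using planeI_intro[OF Ipt spn_gen[of "{..<n} - {p}" "oth p" "\<lambda>s. sv (a s)"]] oth_lt[of p] oth_ne[of p]
        ptA[OF oth_lt] sv_nE[OF nE(1)] vadd_zz_nE[OF nE(1)] by simp
    have "B (b p) ?y = 0" using Mp_ak M nE_form[OF nE(1)] sv_nE[OF nE(1)] by simp
    then have "gdist G n (b p) ?y = altv" unfolding alt True gdist_def using Sph by simp
    then show ?thesis using yin by blast
  next
    case False
    then have Mpos: "B Mp Mp > 0" using M0 by simp
    let ?y = "vsc (1 / sqrt (B Mp Mp)) Mp"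
    have ypt: "isPt G n ?y" using Mpos iv_Mp inV_vsc Sph by (simp add: isPt_def form_lin)
    have yin: "?y \<in> Sp" unfolding Sp_def
      using planeI_intro[OF Ipt spn_sc[OF F10]] ypt vadd_zz_nE[OF nE(1)] by simp
    have "B (b p) ?y = B Mp ?y" using Sp_facts[OF yin] nE_form[OF nE(1)] sv_nE[OF nE(1)] by auto
    also have "\<dots> = sqrt (B Mp Mp)" using Mpos by (simp add: form_lin real_div_sqrt)
    finally have "gdist G n (b p) ?y = altv" unfolding alt gdist_def using Sph by simp
    then show ?thesis using yin by blast
  qed
  then show ?thesis using lb by blast
qed

lemma alt_Hyp: assumes Hyp: "G = Hyp" shows "(\<forall>y\<in>Sp. altv \<le> gdist G n (b p) y) \<and> (\<exists>y\<in>Sp. gdist G n (b p) y = altv)"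
proof -
  have nE: "G \<noteq> Euc" using Hyp by auto
  have bb: "B (b p) (b p) = -1" using ptB[OF pn] Hyp by (simp add: isPt_def)
  have MM: "B Mp Mp = -1 - bet^2" using MM_eq nE_form[OF nE] bb by simp
  have Mneg: "form Hyp n Mp Mp < 0" using MM Hyp by (simp add: add_pos_nonneg) (smt (verit) zero_le_power2)
  have "B Mp (a (oth p)) = B (b p) (a (oth p))" using Mp_ak sv_nE[OF nE] by simp
  moreover have "form Hyp n (b p) (a (oth p)) \<le> -1" using fut_le ptB[OF pn] ptA[OF oth_lt] Hyp by simp
  ultimately have neg: "form Hyp n Mp (a (oth p)) < 0" using Hyp by simp
  have ptAH: "isPt Hyp n (a (oth p))" using ptA[OF oth_lt] Hyp by simp
  have Mt: "Mp n > 0" by (rule fut_dir[OF Mneg ptAH neg])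
  have sq: "sqrt (- B Mp Mp) = sqrt (1 + bet^2)" using MM by simp
  have alt: "altv = arcosh (sqrt (- B Mp Mp))" unfolding altv_def sq using Hyp by simp
  have s1: "1 \<le> sqrt (- B Mp Mp)" using MM by simp
  have lb: "altv \<le> gdist G n (b p) y" if y: "y \<in> Sp" for y
  proof -
    have yp: "isPt Hyp n y" and e: "B (b p) y = B Mp y"
      using Sp_facts[OF y] nE_form[OF nE] sv_nE[OF nE] Hyp by auto
    have "- form Hyp n Mp y \<ge> sqrt (- form Hyp n Mp Mp)" by (rule rev_CS[OF Mneg Mt yp])
    then have "sqrt (- B Mp Mp) \<le> - B (b p) y" using e Hyp by simp
    then have "arcosh (sqrt (- B Mp Mp)) \<le> arcosh (- B (b p) y)" using s1 arcosh_mono by blast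
    then show ?thesis unfolding alt gdist_def using Hyp by simp
  qed
  let ?k = "sqrt (- B Mp Mp)"
  let ?y = "vsc (1 / ?k) Mp"
  have kp: "?k > 0" using Mneg Hyp by simp
  have "B ?y ?y = B Mp Mp / ?k^2" by (simp add: form_lin power2_eq_square)
  also have "\<dots> = -1" using Mneg Hyp by simp
  finally have yy: "B ?y ?y = -1" .
  have ivy: "inV N ?y" by (rule inV_vsc[OF iv_Mp])
  have ynt: "?y n > 0" using kp Mt by (simp add: vsc_def)
  have ypt: "isPt G n ?y" unfolding isPt_def using ivy yy ynt Hyp by simp
  have yin: "?y \<in> Sp" unfolding Sp_def
    using planeI_intro[OF Ipt spn_sc[OF F10]] ypt vadd_zz_nE[OF nE] by simp
  have "B (b p) ?y = B Mp ?y" using Sp_facts[OF yin] nE_form[OF nE] sv_nE[OF nE] by auto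
  also have "\<dots> = B Mp Mp / ?k" by (simp add: form_lin)
  also have "\<dots> = - ?k"
  proof -
    have gen: "\<And>x::real. x < 0 \<Longrightarrow> x / sqrt (- x) = - sqrt (- x)"
    proof -
      fix x :: real assume x: "x < 0"
      have "(- x) / sqrt (- x) = sqrt (- x)" using real_div_sqrt[of "- x"] x by simp
      then show "x / sqrt (- x) = - sqrt (- x)" by (metis minus_divide_left minus_minus)
    qed
    show ?thesis using gen Mneg Hyp by simp
  qed
  finally have "gdist G n (b p) ?y = altv" unfolding alt gdist_def using Hyp by simp
  then show ?thesis using lb yin by blast

qed

lemma alt_ok: "(\<forall>y\<in>Sp. altv \<le> gdist G n (b p) y) \<and> (\<exists>y\<in>Sp. gdist G n (b p) y = altv)"
  using alt_Euc alt_Sph alt_Hyp by (cases G) auto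

lemma altitude_eq: "altitude G n a b p = altv"
proof -
  obtain y where y: "y \<in> Sp" "gdist G n (b p) y = altv" using alt_ok by blast
  have "altv \<in> gdist G n (b p) ` Sp" using y by (metis image_eqI)
  then show ?thesis unfolding altitude_def Sp_def[symmetric]
    using alt_ok by (intro cInf_eq_minimum) auto
qed

lemma betaP_eq: "betaP G n a b p = bet"
proof (cases G)
  case Euc then show ?thesis unfolding betaP_def altitude_eq altv_def by simp
next
  case Sph
  have "\<bar>sqrt (1 - bet^2)\<bar> \<le> 1" "1 - bet^2 \<ge> 0"
  proof -
    have "B Mp Mp \<ge> 0" using form_nonneg_E Sph by simp
    moreover have "B Mp Mp = 1 - bet^2"
      using MM_eq nE_form[of "b p" "b p"] ptB[OF pn] Sph by (simp add: isPt_def)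
    ultimately show "1 - bet^2 \<ge> 0" by simp
    then show "\<bar>sqrt (1 - bet^2)\<bar> \<le> 1" by simp
  qed
  then have "sin (arccos (sqrt (1 - bet^2))) = bet" using bet_pos by (simp add: sin_arccos_abs)
  then show ?thesis unfolding betaP_def altitude_eq altv_def using Sph by simp
next
  case Hyp
  have "sinh (arcosh (sqrt (1 + bet^2))) = bet" using bet_pos by (simp add: sinh_arcosh_real)
  then show ?thesis unfolding betaP_def altitude_eq altv_def using Hyp by simp
qed

end

context CP begin

definition "yb = vadd (vsc cc Aq) (vsc bet np)"

lemma wp_split: "wp = vadd (Pr (sv (b p))) yb"
  unfolding wp_def Mp_def yb_def vadd_def by (simp add: fun_eq_iff)
lemma bp_split: "sv (b p) = vadd (Pr (sv (b p))) Bp"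
  unfolding Bp_def vadd_def vsub_def by (simp add: fun_eq_iff)
lemma W_yb: "Wperp yb" unfolding yb_def by (intro Wperp_lin W_Aq W_np)


interpretation sw: CP G n q p k a b Pr by (rule swap)

abbreviation "Bq \<equiv> sw.Bp"
abbreviation "cq \<equiv> sw.cc"
abbreviation "betq \<equiv> sw.bet"
abbreviation "nq \<equiv> sw.np"
abbreviation "wq \<equiv> sw.wp"
abbreviation "y0q \<equiv> sw.y0"

lemma sw_Ap: "sw.Ap = Aq" unfolding sw.Ap_def Aq_def ..
lemma sw_Aq: "sw.Aq = Ap" unfolding sw.Aq_def Ap_def ..
lemma Wperp_sw: "sw.Wperp = Wperp"
  unfolding sw.Wperp_def Wperp_def by (auto simp: insert_commute fun_eq_iff)

lemma W_nq: "Wperp nq" using sw.W_np Wperp_sw by simp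
lemma nq_nrm: "nrm G n a q = nq" using sw.np_nrm .
lemma bzq: "bzero G n a b q = y0q" using sw.bzero_eq .
lemma betaq: "betaP G n a b q = betq" using sw.betaP_eq .
lemma betq_pos: "betq > 0" using sw.bet_pos .
lemma nq_orth: "s < n \<Longrightarrow> s \<noteq> q \<Longrightarrow> B nq (sv (a s)) = 0" using sw.orthFp(2) .

abbreviation "ybq \<equiv> sw.yb"

lemma W_ybq: "Wperp ybq" using sw.W_yb Wperp_sw by simp
lemma W_Bq: "Wperp Bq" using sw.W_Bp Wperp_sw by simp
lemma wq_split: "wq = vadd (Pr (sv (b q))) ybq" using sw.wp_split .
lemma bq_split: "sv (b q) = vadd (Pr (sv (b q))) Bq" using sw.bp_split .

lemma Pr_cross: "Wperp U \<Longrightarrow> Wperp V \<Longrightarrow> B (vadd (Pr x) U) (vadd (Pr y) V) = B (Pr x) (Pr y) + B U V"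
proof -
  assume U: "Wperp U" and V: "Wperp V"
  have "B U (Pr y) = 0" "B V (Pr x) = 0" using Wperp_Pr U V by auto
  then show ?thesis by (simp add: form_lin form_sym[of G n "Pr x" V])
qed

lemma X_eq: "B (sv (b p)) (sv (b q)) - B wp wq = B Bp Bq - B yb ybq"
proof -
  have "B (sv (b p)) (sv (b q)) = B (vadd (Pr (sv (b p))) Bp) (vadd (Pr (sv (b q))) Bq)"
    by (simp only: bp_split[symmetric] bq_split[symmetric])
  also have "\<dots> = B (Pr (sv (b p))) (Pr (sv (b q))) + B Bp Bq" by (rule Pr_cross[OF W_Bp W_Bq])
  finally have 1: "B (sv (b p)) (sv (b q)) = B (Pr (sv (b p))) (Pr (sv (b q))) + B Bp Bq" .
  have 2: "B wp wq = B (Pr (sv (b p))) (Pr (sv (b q))) + B yb ybq"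
    unfolding wp_split wq_split by (rule Pr_cross[OF W_yb W_ybq])
  show ?thesis using 1 2 by simp
qed

lemma hH_eq: "hH G n a b p q = B nq wp / bet"
proof -
  have z: "B nq (sv (a (oth q))) = 0" using nq_orth oth_lt oth_ne by blast
  have "form G n (rel G y0 (a (oth q))) nq = B nq (sv y0)"
    unfolding form_sym[of G n _ nq] rel_form z by simp
  then show ?thesis unfolding hH_def bzero_eq nq_nrm betaP_eq sv_y0 by simp
qed

lemma hH_eq2: "hH G n a b p q = (cc * B nq Aq + bet * B nq np) / bet"
proof -
  have "B nq wp = cc * B nq Aq + bet * B nq np"
    unfolding wp_split yb_def using Wperp_Pr[OF W_nq] by (simp add: form_lin)
  then show ?thesis using hH_eq by simp
qed

lemma pts: "isPt G n (b p)" "isPt G n (b q)" "isPt G n y0" "isPt G n y0q"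
  using ptB pn qn y0_pt sw.y0_pt by auto

lemma eE_eq: "eE G n a b p q = (B Bp Bq - B yb ybq) / (2 * bet * betq)"
proof -
  have key: "(case G of Euc \<Rightarrow> - (1/2) * (gdist G n (b p) (b q))\<^sup>2 + (1/2) * (gdist G n y0 y0q)\<^sup>2
      | Sph \<Rightarrow> cos (gdist G n (b p) (b q)) - cos (gdist G n y0 y0q)
      | Hyp \<Rightarrow> - cosh (gdist G n (b p) (b q)) + cosh (gdist G n y0 y0q))
      = B (sv (b p)) (sv (b q)) - B wp wq"
  proof (cases G)
    case Euc
    have e1: "(gdist G n (b p) (b q))^2 = B (sv (b p)) (sv (b p)) - 2 * B (sv (b p)) (sv (b q)) + B (sv (b q)) (sv (b q))"
    proof -
      have "B (vsub (sv (b p)) (sv (b q))) (vsub (sv (b p)) (sv (b q))) \<ge> 0" using form_nonneg_E Euc by simp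
      moreover have "B (vsub (sv (b p)) (sv (b q))) (vsub (sv (b p)) (sv (b q))) =
         B (sv (b p)) (sv (b p)) - 2 * B (sv (b p)) (sv (b q)) + B (sv (b q)) (sv (b q))"
        by (simp add: form_lin form_sym[of G n "sv (b q)" "sv (b p)"])
      ultimately show ?thesis using gd_Euc[OF Euc, of "b p" "b q"] by simp
    qed
    have e2: "(gdist G n y0 y0q)^2 = B wp wp - 2 * B wp wq + B wq wq"
    proof -
      have "B (vsub wp wq) (vsub wp wq) \<ge> 0" using form_nonneg_E Euc by simp
      moreover have "B (vsub wp wq) (vsub wp wq) = B wp wp - 2 * B wp wq + B wq wq"
        by (simp add: form_lin form_sym[of G n wq wp])
      ultimately show ?thesis using gd_Euc[OF Euc, of y0 y0q] sv_y0 sw.sv_y0 by simp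
    qed
    have "B wp wp = B (sv (b p)) (sv (b p))" "B wq wq = B (sv (b q)) (sv (b q))"
      using F6 sw.F6 by auto
    then show ?thesis using e1 e2 Euc by (simp add: algebra_simps)
  next
    case Sph
    have u: "B (b p) (b p) = 1" "B (b q) (b q) = 1" "B y0 y0 = 1" "B y0q y0q = 1"
      using pts Sph by (auto simp: isPt_def)
    have c1: "cos (gdist G n (b p) (b q)) = B (b p) (b q)"
      unfolding gdist_def using Sph unit_abs[OF Sph u(1,2)] by (simp add: cos_arccos_abs)
    have c2: "cos (gdist G n y0 y0q) = B y0 y0q"
      unfolding gdist_def using Sph unit_abs[OF Sph u(3,4)] by (simp add: cos_arccos_abs)
    have "B (sv (b p)) (sv (b q)) - B wp wq = B (b p) (b q) - B y0 y0q"
      using sv_y0 sw.sv_y0 by (simp only: sv_id_Sph[OF Sph])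
    then show ?thesis using c1 c2 Sph by simp
  next
    case Hyp
    have ptH: "isPt Hyp n (b p)" "isPt Hyp n (b q)" "isPt Hyp n y0" "isPt Hyp n y0q" using pts Hyp by auto
    have l1: "1 \<le> - B (b p) (b q)" "1 \<le> - B y0 y0q"
      using fut_le[OF ptH(1,2)] fut_le[OF ptH(3,4)] Hyp by auto
    have c1: "cosh (gdist G n (b p) (b q)) = - B (b p) (b q)"
      unfolding gdist_def using Hyp l1 by simp
    have c2: "cosh (gdist G n y0 y0q) = - B y0 y0q"
      unfolding gdist_def using Hyp l1 by simp
    have "B (sv (b p)) (sv (b q)) - B wp wq = B (b p) (b q) - B y0 y0q"
      using sv_y0 sw.sv_y0 by (simp only: sv_id_Hyp[OF Hyp])
    then show ?thesis using c1 c2 Hyp by simp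
  qed
  show ?thesis unfolding eE_def Let_def bzero_eq bzq betaP_eq betaq key X_eq by simp
qed

end

lemma trig_final:
  fixes al b1 b2 cg :: real
  assumes s1: "sin b1 \<noteq> 0" and s2: "sin b2 \<noteq> 0"
  defines "h1 \<equiv> (cos b1 * sin al - sin b1 * cos al) / sin b1"
    and "h2 \<equiv> (cos b2 * sin al - sin b2 * cos al) / sin b2"
    and "E \<equiv> (cg - (cos b1 * cos b2 * cos al + cos b1 * sin b2 * sin al + sin b1 * cos b2 * sin al
              - sin b1 * sin b2 * cos al)) / (2 * sin b1 * sin b2)"
  shows "\<exists>\<kappa>::real. \<kappa> \<noteq> 0 \<and>
              (\<forall>tp tq :: real.
                 (cg - cos (al + b1 + b2)) * tp\<^sup>2 * tq\<^sup>2 + (cg - cos (al + b1 - b2)) * tp\<^sup>2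
                 + 2 * (- 2 * sin b1 * sin b2) * tp * tq + (cg - cos (al + b2 - b1)) * tq\<^sup>2
                 + (cg - cos (al - b1 - b2))
                 = \<kappa> * ((h2 + h1 - 2 * (- cos al) + E) * tp\<^sup>2 * tq\<^sup>2 + (h2 + E) * tp\<^sup>2 - 2 * tp * tq
                     + (h1 + E) * tq\<^sup>2 + E))"
proof -
  let ?k = "2 * sin b1 * sin b2"
  have k: "?k \<noteq> 0" using s1 s2 by simp
  have e1: "cg - cos (al + b1 + b2) = ?k * (h2 + h1 - 2 * (- cos al) + E)"
    unfolding h1_def h2_def E_def using s1 s2
    by (simp add: cos_add sin_add cos_diff sin_diff field_simps; simp add: algebra_simps)
  have e2: "cg - cos (al + b1 - b2) = ?k * (h2 + E)"
    unfolding h1_def h2_def E_def using s1 s2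
    by (simp add: cos_add sin_add cos_diff sin_diff field_simps; simp add: algebra_simps)
  have e3: "cg - cos (al + b2 - b1) = ?k * (h1 + E)"
    unfolding h1_def h2_def E_def using s1 s2
    by (simp add: cos_add sin_add cos_diff sin_diff field_simps; simp add: algebra_simps)
  have e4: "cg - cos (al - b1 - b2) = ?k * E"
    unfolding E_def using s1 s2
    by (simp add: cos_add sin_add cos_diff sin_diff field_simps; simp add: algebra_simps)
  show ?thesis
    by (rule exI[of _ ?k], intro conjI k allI, unfold e1 e2 e3 e4) (simp add: algebra_simps)
qed

lemma cs_aux:
  fixes x y z :: real
  assumes x: "x > 0" and y: "y > 0" and cs: "z^2 < x * y"
  defines "c \<equiv> z / sqrt (x * y)"
  shows "\<bar>c\<bar> < 1" and "cos (arccos c) = c" and "sin (arccos c) = sqrt (1 - c^2)" and "sin (arccos c) > 0"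
    and "z = sqrt x * sqrt y * c" and "sqrt (x - z^2 / y) = sqrt x * sin (arccos c)"
proof -
  have sxy: "sqrt (x * y) > 0" using x y by simp
  have c2: "c^2 = z^2 / (x * y)" unfolding c_def using x y by (simp add: power_divide)
  then have "c^2 < 1" using cs x y by simp
  then show ca: "\<bar>c\<bar> < 1" by (simp add: abs_square_less_1)
  show "cos (arccos c) = c" using ca by (simp add: cos_arccos_abs)
  show sa: "sin (arccos c) = sqrt (1 - c^2)" using ca by (simp add: sin_arccos_abs)
  show "sin (arccos c) > 0" using sa \<open>c^2 < 1\<close> by simp
  show "z = sqrt x * sqrt y * c" unfolding c_def using sxy x y by (simp add: real_sqrt_mult)
  have "x - z^2 / y = x * (1 - c^2)" unfolding c2 using x y by (simp add: field_simps)
  then show "sqrt (x - z^2 / y) = sqrt x * sin (arccos c)" using sa by (simp add: real_sqrt_mult)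
qed

lemma scalar_main:
  fixes a11 a22 a12 uu u2 vv v1 uv :: real
  assumes p1: "a11 > 0" and p2: "a22 > 0" and p3: "uu > 0" and p4: "vv > 0"
    and c1: "a12^2 < a11 * a22" and c2: "u2^2 < uu * a22" and c3: "v1^2 < vv * a11" and c4: "uv^2 < uu * vv"
  assumes npAp_def: "npAp = sqrt (a11 - a12^2 / a22)" and nqAq_def: "nqAq = sqrt (a22 - a12^2 / a11)"
    and npnq_def: "npnq = - a12 / sqrt (a11 * a22)"
    and bp_def: "bp = sqrt (uu - u2^2 / a22)" and bq_def: "bq = sqrt (vv - v1^2 / a11)"
    and cp_def: "cp = u2 / a22" and cq_def: "cq = v1 / a11"
    and E_def: "E = (uv - (cp * cq * a12 + cp * bq * nqAq + bp * cq * npAp + bp * bq * npnq)) / (2 * bp * bq)"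
    and h1_def: "h1 = (cp * nqAq + bp * npnq) / bp" and h2_def: "h2 = (cq * npAp + bq * npnq) / bq"
    and al_def: "al = arccos (a12 / sqrt (a11 * a22))" and b1_def: "b1 = arccos (u2 / sqrt (uu * a22))"
    and b2_def: "b2 = arccos (v1 / sqrt (vv * a11))" and ga_def: "ga = arccos (uv / sqrt (uu * vv))"
  shows "\<exists>\<kappa>::real. \<kappa> \<noteq> 0 \<and>
              (\<forall>tp tq :: real.
                 (cos ga - cos (al + b1 + b2)) * tp\<^sup>2 * tq\<^sup>2 + (cos ga - cos (al + b1 - b2)) * tp\<^sup>2
                 + 2 * (- 2 * sin b1 * sin b2) * tp * tq + (cos ga - cos (al + b2 - b1)) * tq\<^sup>2
                 + (cos ga - cos (al - b1 - b2))
                 = \<kappa> * ((h2 + h1 - 2 * npnq + E) * tp\<^sup>2 * tq\<^sup>2 + (h2 + E) * tp\<^sup>2 - 2 * tp * tq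
                     + (h1 + E) * tq\<^sup>2 + E))"
proof -
  let ?A1 = "sqrt a11" and ?A2 = "sqrt a22" and ?U = "sqrt uu" and ?V = "sqrt vv"
  have P: "?A1 > 0" "?A2 > 0" "?U > 0" "?V > 0" using p1 p2 p3 p4 by auto
  note A = cs_aux[OF p1 p2 c1, folded al_def]
  note B1 = cs_aux[OF p3 p2 c2, folded b1_def]
  note B2 = cs_aux[OF p4 p1 c3, folded b2_def]
  note C = cs_aux[OF p3 p4 c4, folded ga_def]
  have c1': "a12^2 < a22 * a11" using c1 by (simp add: mult.commute)
  note A' = cs_aux[OF p2 p1 c1']
  have sa: "sqrt (a22 * a11) = sqrt (a11 * a22)" by (simp add: mult.commute)
  have n1: "npAp = ?A1 * sin al" unfolding npAp_def using A(6) .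
  have n2: "nqAq = ?A2 * sin al" unfolding nqAq_def using A'(6) sa al_def by simp
  have n3: "npnq = - cos al" unfolding npnq_def using A(2) al_def by simp
  have n4: "bp = ?U * sin b1" unfolding bp_def using B1(6) .
  have n5: "bq = ?V * sin b2" unfolding bq_def using B2(6) .
  have e12: "a12 = ?A1 * ?A2 * cos al" using A(5) A(2) by simp
  have eu2: "u2 = ?U * ?A2 * cos b1" using B1(5) B1(2) by simp
  have ev1: "v1 = ?V * ?A1 * cos b2" using B2(5) B2(2) by simp
  have euv: "uv = ?U * ?V * cos ga" using C(5) C(2) by simp
  have sq: "?A1^2 = a11" "?A2^2 = a22" using p1 p2 by simp_all
  have n6: "cp = ?U * cos b1 / ?A2" unfolding cp_def eu2 using P sq by (simp add: power2_eq_square field_simps)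
  have n7: "cq = ?V * cos b2 / ?A1" unfolding cq_def ev1 using P sq by (simp add: power2_eq_square field_simps)
  have sb: "sin b1 \<noteq> 0" "sin b2 \<noteq> 0" using B1(4) B2(4) by auto
  have H1: "h1 = (cos b1 * sin al - sin b1 * cos al) / sin b1"
    unfolding h1_def n2 n3 n4 n6 using P sb by (simp add: field_simps)
  have H2: "h2 = (cos b2 * sin al - sin b2 * cos al) / sin b2"
    unfolding h2_def n1 n3 n5 n7 using P sb by (simp add: field_simps)
  have EE: "E = (cos ga - (cos b1 * cos b2 * cos al + cos b1 * sin b2 * sin al + sin b1 * cos b2 * sin al
              - sin b1 * sin b2 * cos al)) / (2 * sin b1 * sin b2)"
    unfolding E_def n1 n2 n3 n4 n5 n6 n7 euv using P sb
    by (subst e12) (simp add: field_simps)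
  show ?thesis unfolding H1 H2 EE n3 using trig_final[OF sb, where al=al and cg="cos ga"] by simp
qed

context CP begin

lemma smp_Pq': "facetP a b q q = b q" "facetP a b q p = a p" unfolding facetP_def using pq by auto
lemma smp_PQ': "facetPQ a b p q p = b p" "facetPQ a b p q q = b q" unfolding facetPQ_def using pq by auto

lemma hqp: "hH G n a b q p = (cq * B np Ap + betq * B np nq) / betq"
  using CP.hH_eq2[OF swap] unfolding CP.Aq_def[OF swap] Ap_def by simp

lemma ybq_def': "ybq = vadd (vsc cq Ap) (vsc betq nq)"
  using CP.yb_def[OF swap] unfolding CP.Aq_def[OF swap] Ap_def by simp

lemma main_CP:
  "let \<alpha> = dih G n a p q;
             \<beta>pq = dih G n (facetP a b p) p q;
             \<beta>qp = dih G n (facetP a b q) q p;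
             \<gamma> = dih G n (facetPQ a b p q) p q;
             A' = cos \<gamma> - cos (\<alpha> + \<beta>pq + \<beta>qp);
             B'pq = cos \<gamma> - cos (\<alpha> + \<beta>pq - \<beta>qp);
             B'qp = cos \<gamma> - cos (\<alpha> + \<beta>qp - \<beta>pq);
             C' = - 2 * sin \<beta>pq * sin \<beta>qp;
             E' = cos \<gamma> - cos (\<alpha> - \<beta>pq - \<beta>qp);
             E = eE G n a b p q;
             A = hH G n a b q p + hH G n a b p q - 2 * gG G n a p q + E;
             Bpq = hH G n a b q p + E;
             Bqp = hH G n a b p q + E
         in \<exists>\<kappa>::real. \<kappa> \<noteq> 0 \<and>
              (\<forall>tp tq :: real.
                 A' * tp\<^sup>2 * tq\<^sup>2 + B'pq * tp\<^sup>2 + 2 * C' * tp * tq + B'qp * tq\<^sup>2 + E'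
                 = \<kappa> * (A * tp\<^sup>2 * tq\<^sup>2 + Bpq * tp\<^sup>2 - 2 * tp * tq + Bqp * tq\<^sup>2 + E))"
proof -
  define a11 where "a11 = B Ap Ap"
  define a22 where "a22 = B Aq Aq"
  define a12 where "a12 = B Ap Aq"
  define uu where "uu = B Bp Bp"
  define u2 where "u2 = B Bp Aq"
  define vv where "vv = B Bq Bq"
  define v1 where "v1 = B Bq Ap"
  define uv where "uv = B Bp Bq"
  have P1: "a11 > 0" unfolding a11_def by (rule Ap_pos)
  have P2: "a22 > 0" unfolding a22_def by (rule Aq_pos)
  have P3: "uu > 0" unfolding uu_def Bp_def using Ppos[OF smp_Pp pq_in(1)] Pp_p by simp
  have P4: "vv > 0" unfolding vv_def CP.Bp_def[OF swap] using Ppos[OF smp_Pq pq_in(2)] smp_Pq' by simp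
  have C1: "a12^2 < a11 * a22" unfolding a11_def a22_def a12_def Ap_def Aq_def
    using CSstrict[OF smp_a pq_in(1) pq_in(2) pq] .
  have C2: "u2^2 < uu * a22" unfolding uu_def a22_def u2_def Bp_def Aq_def
    using CSstrict[OF smp_Pp pq_in(1) pq_in(2) pq] Pp_p Pp_q by simp
  have C3: "v1^2 < vv * a11" unfolding vv_def a11_def v1_def CP.Bp_def[OF swap] Ap_def
    using CSstrict[OF smp_Pq pq_in(2) pq_in(1) pq[symmetric]] smp_Pq' by simp
  have C4: "uv^2 < uu * vv" unfolding uu_def vv_def uv_def Bp_def CP.Bp_def[OF swap]
    using CSstrict[OF smp_PQ pq_in(1) pq_in(2) pq] smp_PQ' by simp
  have d1: "dih G n a p q = arccos (a12 / sqrt (a11 * a22))"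
    unfolding a11_def a22_def a12_def Ap_def Aq_def by (rule dih_v[OF smp_a pq_in(1) pq_in(2) pq])
  have d2: "dih G n (facetP a b p) p q = arccos (u2 / sqrt (uu * a22))"
    unfolding uu_def a22_def u2_def Bp_def Aq_def using dih_v[OF smp_Pp pq_in(1) pq_in(2) pq] Pp_p Pp_q by simp
  have d3: "dih G n (facetP a b q) q p = arccos (v1 / sqrt (vv * a11))"
    unfolding vv_def a11_def v1_def CP.Bp_def[OF swap] Ap_def using dih_v[OF smp_Pq pq_in(2) pq_in(1) pq[symmetric]] smp_Pq' by simp
  have d4: "dih G n (facetPQ a b p q) p q = arccos (uv / sqrt (uu * vv))"
    unfolding uu_def vv_def uv_def Bp_def CP.Bp_def[OF swap] using dih_v[OF smp_PQ pq_in(1) pq_in(2) pq] smp_PQ' by simp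
  define al where "al = arccos (a12 / sqrt (a11 * a22))"
  define b1 where "b1 = arccos (u2 / sqrt (uu * a22))"
  define b2 where "b2 = arccos (v1 / sqrt (vv * a11))"
  define ga where "ga = arccos (uv / sqrt (uu * vv))"
  define npAp where "npAp = sqrt (a11 - a12^2 / a22)"
  define nqAq where "nqAq = sqrt (a22 - a12^2 / a11)"
  define npnq where "npnq = - a12 / sqrt (a11 * a22)"
  define bp where "bp = sqrt (uu - u2^2 / a22)"
  define bq where "bq = sqrt (vv - v1^2 / a11)"
  define cp' where "cp' = u2 / a22"
  define cq' where "cq' = v1 / a11"
  define EE where "EE = (uv - (cp' * cq' * a12 + cp' * bq * nqAq + bp * cq' * npAp + bp * bq * npnq)) / (2 * bp * bq)"
  define h1 where "h1 = (cp' * nqAq + bp * npnq) / bp"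
  define h2 where "h2 = (cq' * npAp + bq * npnq) / bq"
  note SM = scalar_main[OF P1 P2 P3 P4 C1 C2 C3 C4 npAp_def nqAq_def npnq_def bp_def bq_def cp'_def cq'_def
      EE_def h1_def h2_def al_def b1_def b2_def ga_def]
  have a21: "B Aq Ap = a12" unfolding a12_def by (rule form_sym)
  have nq_eq: "nq = Nv G n Aq Ap"
    using CP.np_def[OF swap] CP.Ap_def[OF swap] CP.Aq_def[OF swap] Ap_def Aq_def by simp
  have RRp: "B (Rv G n Ap Aq) (Rv G n Ap Aq) = a11 - a12^2 / a22"
    unfolding a11_def a12_def a22_def using Rv_R Aq_pos by simp
  have RRq: "B (Rv G n Aq Ap) (Rv G n Aq Ap) = a22 - a12^2 / a11"
    unfolding a11_def a22_def using Rv_R[of G n Ap Aq] Ap_pos a21 a12_def by simp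
  have RRp_pos: "a11 - a12^2 / a22 > 0" using C1 P2 by (simp add: field_simps)
  have RRq_pos: "a22 - a12^2 / a11 > 0" using C1 P1 by (simp add: field_simps)
  have g1: "B np Ap = npAp" unfolding npAp_def np_def
    using Nv_X[of G n Aq Ap] Aq_pos RRp RRp_pos by simp
  have g2: "B nq Aq = nqAq" unfolding nqAq_def nq_eq
    using Nv_X[of G n Ap Aq] Ap_pos RRq RRq_pos by simp
  have g3: "B np nq = npnq" unfolding npnq_def np_def nq_eq a12_def a11_def a22_def
    using Nv_Nv[OF Ap_pos Aq_pos] C1 a12_def a11_def a22_def by simp
  have ebet: "bet = bp" unfolding bet_def rp_def bp_def uu_def u2_def a22_def using Rv_R Aq_pos by simp
  have ebetq: "betq = bq"
    unfolding CP.bet_def[OF swap] CP.rp_def[OF swap] bq_def vv_def v1_def a11_def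
    using Rv_R[of G n Ap Bq] Ap_pos CP.Aq_def[OF swap] Ap_def by simp
  have ecc: "cc = cp'" unfolding cc_def cp'_def u2_def a22_def ..
  have ecq: "cq = cq'" unfolding CP.cc_def[OF swap] cq'_def v1_def a11_def using CP.Aq_def[OF swap] Ap_def by simp
  have hp: "hH G n a b p q = h1" unfolding hH_eq2 h1_def ecc ebet g2 form_sym[of G n nq np] g3 ..
  have hq: "hH G n a b q p = h2" unfolding hqp h2_def ecq ebetq g1 g3 ..
  have gg: "gG G n a p q = npnq" unfolding gG_def np_nrm nq_nrm g3 ..
  have Byy: "B yb ybq = cp' * cq' * a12 + cp' * bq * nqAq + bp * cq' * npAp + bp * bq * npnq"
  proof -
    have "B yb ybq = cc * cq * B Aq Ap + cc * betq * B Aq nq + bet * cq * B np Ap + bet * betq * B np nq"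
      unfolding yb_def ybq_def' by (simp add: form_lin algebra_simps)
    then show ?thesis unfolding ecc ecq ebet ebetq a21 form_sym[of G n Aq nq] g1 g2 g3 .
  qed
  have ee: "eE G n a b p q = EE" unfolding eE_eq EE_def Byy ebet ebetq uv_def ..
  show ?thesis unfolding Let_def d1 d2 d3 d4 hp hq gg ee al_def[symmetric] b1_def[symmetric]
      b2_def[symmetric] ga_def[symmetric]
    by (rule SM)
qed

end

lemma indep_top:
  assumes nd: "nondeg G n a" and on: "k < n"
  shows "indep (Jn G n k) (\<lambda>s. sh G a k (a s))"
  unfolding indep_def
proof (intro allI impI ballI)
  fix c s assume lc: "lincomb (Jn G n k) c (\<lambda>s. sh G a k (a s)) = (\<lambda>_. 0)" and s: "s \<in> Jn G n k"
  show "c s = 0"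
  proof (cases "G = Euc")
    case True
    have J: "Jn G n k = {..<n} - {k}" using True Jn_def by simp
    define c' where "c' = (\<lambda>t. if t = k then - (\<Sum>u\<in>Jn G n k. c u) else c t)"
    have split: "\<And>f. (\<Sum>t<n. f t) = f k + (\<Sum>t\<in>Jn G n k. f t)"
      using on J by (metis finite_lessThan lessThan_iff sum.remove)
    have "lincomb {..<n} c' a = (\<lambda>_. 0)"
    proof
      fix i
      have "lincomb {..<n} c' a i = - (\<Sum>u\<in>Jn G n k. c u) * a k i + (\<Sum>t\<in>Jn G n k. c t * a t i)"
        unfolding lincomb_def by (subst split) (auto simp: c'_def J intro!: sum.cong)
      also have "\<dots> = (\<Sum>t\<in>Jn G n k. c t * (a t i - a k i))"
        by (simp add: algebra_simps sum_subtractf sum_distrib_right sum_distrib_left)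
      also have "\<dots> = 0" using fun_cong[OF lc, of i] True unfolding lincomb_def sh_def zz_def vsub_def by simp
      finally show "lincomb {..<n} c' a i = 0" .
    qed
    moreover have "(\<Sum>t<n. c' t) = 0" by (subst split) (auto simp: c'_def J intro!: sum.cong)
    ultimately have "\<forall>t<n. c' t = 0" using nd True unfolding nondeg_def by blast
    moreover have "s < n" "s \<noteq> k" using s J by auto
    ultimately show ?thesis unfolding c'_def by auto
  next
    case False
    have "lincomb {..<n} c a = (\<lambda>_. 0)" using lc False by (simp add: sh_def zz_def Jn_def)
    then show ?thesis using nd s False unfolding nondeg_def Jn_def by auto
  qed
qed

lemma indep_subset: assumes fin: "finite J" and ind: "indep J V" and IJ: "I \<subseteq> J" shows "indep I V"
  unfolding indep_def
proof (intro allI impI ballI)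
  fix c s assume lc: "lincomb I c V = (\<lambda>_. 0)" and s: "s \<in> I"
  define c' where "c' = (\<lambda>t. if t \<in> I then c t else 0)"
  have "lincomb J c' V = lincomb I c V"
    unfolding lincomb_def c'_def using fin IJ
    by (auto simp: fun_eq_iff if_distrib[of "\<lambda>c. c * _"] sum.If_cases Int_absorb1 cong: if_cong)
  then have "c' s = 0" using ind lc s IJ unfolding indep_def by auto
  then show "c s = 0" using s c'_def by simp
qed

lemma exists_k: assumes "n \<ge> (3::nat)" shows "\<exists>k<n. k \<noteq> p \<and> k \<noteq> q"
  using assms by (intro exI[of _ "if 0 \<noteq> p \<and> 0 \<noteq> q then 0 else if 1 \<noteq> p \<and> 1 \<noteq> q then 1 else 2"]) auto

theorem mainTheorem10:
  fixes G :: geom and n p q :: nat and a b :: "nat \<Rightarrow> nat \<Rightarrow> real"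
  assumes "n \<ge> 3" and "p < n" and "q < n" and "p \<noteq> q"
    and "crossPolytope G n a b"
  shows "let \<alpha> = dih G n a p q;
             \<beta>pq = dih G n (facetP a b p) p q;
             \<beta>qp = dih G n (facetP a b q) q p;
             \<gamma> = dih G n (facetPQ a b p q) p q;
             A' = cos \<gamma> - cos (\<alpha> + \<beta>pq + \<beta>qp);
             B'pq = cos \<gamma> - cos (\<alpha> + \<beta>pq - \<beta>qp);
             B'qp = cos \<gamma> - cos (\<alpha> + \<beta>qp - \<beta>pq);
             C' = - 2 * sin \<beta>pq * sin \<beta>qp;
             E' = cos \<gamma> - cos (\<alpha> - \<beta>pq - \<beta>qp);
             E = eE G n a b p q;
             A = hH G n a b q p + hH G n a b p q - 2 * gG G n a p q + E;
             Bpq = hH G n a b q p + E;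
             Bqp = hH G n a b p q + E
         in \<exists>\<kappa>::real. \<kappa> \<noteq> 0 \<and>
              (\<forall>tp tq :: real.
                 A' * tp\<^sup>2 * tq\<^sup>2 + B'pq * tp\<^sup>2 + 2 * C' * tp * tq + B'qp * tq\<^sup>2 + E'
                 = \<kappa> * (A * tp\<^sup>2 * tq\<^sup>2 + Bpq * tp\<^sup>2 - 2 * tp * tq + Bqp * tq\<^sup>2 + E))"
proof -
  obtain k where k: "k < n" "k \<noteq> p" "k \<noteq> q" using exists_k[OF assms(1)] by blast
  have cp: "crossPolytope G n a b" by (rule assms(5))
  have ptA: "\<And>s. s < n \<Longrightarrow> isPt G n (a s)" using cp unfolding crossPolytope_def by blast
  have "\<forall>c. nondeg G n (\<lambda>i. if c i then b i else a i)" using cp unfolding crossPolytope_def by blast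
  from spec[OF this, of "\<lambda>_. False"] have nd: "nondeg G n a" by simp
  have ivz: "inV (amb G n) (zz G a k)" using ptA[OF k(1)] by (cases "G = Euc") (simp_all add: zz_def isPt_def inV_zero)
  have JWJn: "JW G n p q k \<subseteq> Jn G n k" unfolding JW_def Jn_def by auto
  have fJn: "finite (Jn G n k)" unfolding Jn_def by simp
  have finJW: "finite (JW G n p q k)" using JWJn fJn finite_subset by blast
  have ind: "indep (JW G n p q k) (\<lambda>s. sh G a k (a s))"
    by (rule indep_subset[OF fJn indep_top[OF nd k(1)] JWJn])
  have iv: "\<And>s. s \<in> JW G n p q k \<Longrightarrow> inV (amb G n) (sh G a k (a s))"
    unfolding sh_def JW_def using ptA ivz inV_vsub unfolding isPt_def by auto
  have hyp: "G = Hyp \<Longrightarrow> k \<in> JW G n p q k \<and> form G n (sh G a k (a k)) (sh G a k (a k)) < 0"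
  proof -
    assume H: "G = Hyp"
    have "sh G a k (a k) = a k" using H unfolding sh_def zz_def vsub_def by simp
    moreover have "form G n (a k) (a k) = -1" using ptA[OF k(1)] H by (simp add: isPt_def)
    ultimately show ?thesis using k H unfolding JW_def by simp
  qed
  obtain Pr where Pr: "projok G n (JW G n p q k) (\<lambda>s. sh G a k (a s)) Pr"
    using proj_exists[OF finJW ind iv hyp] by blast
  interpret C: CP G n p q k a b Pr
    by unfold_locales (fact assms(1) assms(2) assms(3) assms(4) assms(5) k(1) k(2) k(3) Pr)+
  show ?thesis by (rule C.main_CP)
qed

end
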